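(* Let $M_p$, $A_p$, $\rho$ be as in the context and let $a\in\Gamma^{*,\infty}_{A_p,\rho}(\mathbb R^{2d})$ be $\Gamma^{*,\infty}_{A_p,\rho}$-hypoelliptic. Then there is $B>0$ such that $a$ does not vanish on $Q_B^c$ and $p_0(x,\xi)=a(x,\xi)^{-1}$ satisfies: in the Beurling case $*=(M_p)$, for every $h>0$ there exists $C>0$, and in the Roumieu case $*=\{M_p\}$, there exist $h,C>0$, such that $$|D^\alpha_\xi D^\beta_x p_0(x,\xi)|\le C\frac{h^{|\alpha|+|\beta|}|p_0(x,\xi)|A_{\alpha+\beta}}{\langle(x,\xi)\rangle^{\rho(|\alpha|+|\beta|)}},\quad \alpha,\beta\in\mathbb N^d,\ (x,\xi)\in Q^c_B.$$
   Context: Sequences: $M_p,A_p$ ($p\in\mathbb N$) are sequences of positive numbers with $M_0=M_1=A_0=A_1=1$. Conditions: (M.1) $N_p^2\le N_{p-1}N_{p+1}$ for $p\ge1$; (M.2) $N_p\le c_0H^p\min_{0\le q\le p}N_{p-q}N_q$ for some $c_0,H\ge1$; (M.3) $\sum_{p=q+1}^\infty N_{p-1}/N_p\le c_0 q N_q/N_{q+1}$ for $q\ge1$; (M.3)' $\sum_{p\ge1}N_{p-1}/N_p<\infty$; (M.4) $(N_p/p!)^2\le \frac{N_{p-1}}{(p-1)!}\frac{N_{p+1}}{(p+1)!}$ for $p\ge1$. Assume $M_p$ satisfies (M.1),(M.2),(M.3); $A_p$ satisfies (M.1),(M.2),(M.3)',(M.4); and $A_p\le c_0L^pM_p$ for some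 $c_0,L>0$ and all $p$. Let $\rho_0=\inf\{r>0:\exists c,L>0,\ A_p\le cL^pM_p^{r}\ \forall p\}$ and fix $\rho$ with $\rho_0\le\rho\le1$ if the infimum is attained, otherwise $\rho_0<\rho\le1$. For a multi-index $\alpha$, $A_\alpha=A_{|\alpha|}$. $M(t)=\sup_{p\in\mathbb N}\log_+(t^p/M_p)$ is the associated function of $M_p$. $\langle x\rangle=(1+|x|^2)^{1/2}$, $D^\alpha=(-i\partial)^\alpha$, and $Q_B^c=\{(x,\xi)\in\mathbb R^{2d}:\langle x\rangle\ge B\text{ or }\langle\xi\rangle\ge B\}$. Symbols: for $h,m>0$, $\Gamma^{M_p,\infty}_{A_p,\rho}(\mathbb R^{2d};h,m)$ is the set of $a\in C^\infty(\mathbb R^{2d})$ with $\sup_{\alpha,\beta\in\mathbb N^d}\sup_{(x,\xi)}|D^\alpha_\xi D^\beta_x a(x,\xi)|\langle(x,\xi)\rangle^{\rho|\alpha+\beta|}e^{-M(m|x|)-M(m|\xi|)}/(h^{|\alpha+\beta|}A_\alpha A_\beta)<\infty$. $a\in\Gamma^{(M_p),\infty}_{A_p,\rho}$ iff there is $m>0$ such that this holds for every $h>0$; $a\in\Gamma^{\{M_p\},\infty}_{A_p,\rho}$ iff there is $h>0$ such that this holds for every $m>0$. $*$ denotes $(M_p)$ or $\{M_p\}$. Hypoellipticity: $a\in\Gamma^{*,\infty}_{A_p,\rho}$ is $\Gamma^{*,\infty}_{A_p,\rho}$-hypoelliptic if (i) there exists $B>0$ such that there exist $c,m>0$ (Beurling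 case) / for every $m>0$ there exists $c>0$ (Roumieu case) with $|a(x,\xi)|\ge c\,e^{-M(m|x|)-M(m|\xi|)}$ on $Q_B^c$; and (ii) there exists $B>0$ such that for every $h>0$ there exists $C>0$ (Beurling) / there exist $h,C>0$ (Roumieu) with $|D^\alpha_\xi D^\beta_x a(x,\xi)|\le C h^{|\alpha|+|\beta|}|a(x,\xi)|A_\alpha A_\beta\langle(x,\xi)\rangle^{-\rho(|\alpha|+|\beta|)}$ for all $\alpha,\beta\in\mathbb N^d$, $(x,\xi)\in Q_B^c$. *)

theory Defs
  imports "HOL-Analysis.Analysis"
begin

definition weight_seq :: "(nat \<Rightarrow> real) \<Rightarrow> bool" where
  "weight_seq N \<longleftrightarrow> (\<forall>p. N p > 0) \<and> N 0 = 1 \<and> N 1 = 1"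

definition cond_M1 :: "(nat \<Rightarrow> real) \<Rightarrow> bool" where
  "cond_M1 N \<longleftrightarrow> (\<forall>p\<ge>1. (N p)^2 \<le> N (p - 1) * N (p + 1))"

text \<open>(M.2): the minimum over q in 0..p is written out as a bound for each such q.\<close>
definition cond_M2 :: "(nat \<Rightarrow> real) \<Rightarrow> bool" where
  "cond_M2 N \<longleftrightarrow> (\<exists>c0 H. c0 \<ge> 1 \<and> H \<ge> 1 \<and>
      (\<forall>p q. q \<le> p \<longrightarrow> N p \<le> c0 * H ^ p * (N (p - q) * N q)))"

text \<open>(M.3): the series over p \<ge> q+1 of N(p-1)/N(p), reindexed p = k + q + 1.\<close>
definition cond_M3 :: "(nat \<Rightarrow> real) \<Rightarrow> bool" where
  "cond_M3 N \<longleftrightarrow> (\<exists>c0. c0 \<ge> 1 \<and> (\<forall>q\<ge>1.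
      summable (\<lambda>k. N (k + q) / N (k + q + 1)) \<and>
      (\<Sum>k. N (k + q) / N (k + q + 1)) \<le> c0 * real q * N q / N (q + 1)))"

definition cond_M3' :: "(nat \<Rightarrow> real) \<Rightarrow> bool" where
  "cond_M3' N \<longleftrightarrow> summable (\<lambda>k. N k / N (k + 1))"

definition cond_M4 :: "(nat \<Rightarrow> real) \<Rightarrow> bool" where
  "cond_M4 N \<longleftrightarrow> (\<forall>p\<ge>1. (N p / fact p)^2 \<le>
      (N (p - 1) / fact (p - 1)) * (N (p + 1) / fact (p + 1)))"

definition assoc_fun :: "(nat \<Rightarrow> real) \<Rightarrow> real \<Rightarrow> real" where
  "assoc_fun N t = (SUP p. max 0 (ln (t ^ p / N p)))"

definition rho_set :: "(nat \<Rightarrow> real) \<Rightarrow> (nat \<Rightarrow> real) \<Rightarrow> real set" where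
  "rho_set M A = {r. r > 0 \<and> (\<exists>c L. c > 0 \<and> L > 0 \<and> (\<forall>p. A p \<le> c * L ^ p * (M p) powr r))}"

definition rho0 :: "(nat \<Rightarrow> real) \<Rightarrow> (nat \<Rightarrow> real) \<Rightarrow> real" where
  "rho0 M A = Inf (rho_set M A)"

definition admissible_rho :: "(nat \<Rightarrow> real) \<Rightarrow> (nat \<Rightarrow> real) \<Rightarrow> real \<Rightarrow> bool" where
  "admissible_rho M A \<rho> \<longleftrightarrow> \<rho> \<le> 1 \<and>
     (if rho0 M A \<in> rho_set M A then rho0 M A \<le> \<rho> else rho0 M A < \<rho>)"

definition mi_abs :: "('n::finite \<Rightarrow> nat) \<Rightarrow> nat" where
  "mi_abs \<alpha> = (\<Sum>i\<in>UNIV. \<alpha> i)"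

definition dirD :: "'v::real_normed_vector \<Rightarrow> ('v \<Rightarrow> complex) \<Rightarrow> 'v \<Rightarrow> complex" where
  "dirD v f z = vector_derivative (\<lambda>t. f (z + t *\<^sub>R v)) (at 0)"

text \<open>Iterated partial derivative \<partial>^\<alpha> along the directions e i (one coordinate
  at a time; for smooth functions the order is irrelevant).\<close>
fun pder_aux :: "nat \<Rightarrow> ('n::finite \<Rightarrow> 'v::real_normed_vector) \<Rightarrow> ('n \<Rightarrow> nat)
                  \<Rightarrow> ('v \<Rightarrow> complex) \<Rightarrow> 'v \<Rightarrow> complex" where
  "pder_aux 0 e \<alpha> f = f"
| "pder_aux (Suc k) e \<alpha> f =
     (if \<alpha> = (\<lambda>_. 0) then f
      else (let i = (SOME i. \<alpha> i \<noteq> 0) in dirD (e i) (pder_aux k e (\<alpha>(i := \<alpha> i - 1)) f)))"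

definition pder :: "('n::finite \<Rightarrow> 'v::real_normed_vector) \<Rightarrow> ('n \<Rightarrow> nat)
                  \<Rightarrow> ('v \<Rightarrow> complex) \<Rightarrow> 'v \<Rightarrow> complex" where
  "pder e \<alpha> f = pder_aux (mi_abs \<alpha>) e \<alpha> f"

definition Dx :: "('n::finite \<Rightarrow> nat) \<Rightarrow> ((real^'n) \<times> (real^'n) \<Rightarrow> complex)
                  \<Rightarrow> (real^'n) \<times> (real^'n) \<Rightarrow> complex" where
  "Dx \<beta> f z = (- \<i>) ^ mi_abs \<beta> * pder (\<lambda>i. (axis i 1, 0)) \<beta> f z"

definition Dxi :: "('n::finite \<Rightarrow> nat) \<Rightarrow> ((real^'n) \<times> (real^'n) \<Rightarrow> complex)
                  \<Rightarrow> (real^'n) \<times> (real^'n) \<Rightarrow> complex" where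
  "Dxi \<alpha> f z = (- \<i>) ^ mi_abs \<alpha> * pder (\<lambda>i. (0, axis i 1)) \<alpha> f z"

definition smooth2 :: "((real^'n::finite) \<times> (real^'n) \<Rightarrow> complex) \<Rightarrow> bool" where
  "smooth2 f \<longleftrightarrow> (\<forall>\<alpha> \<beta>. Dxi \<alpha> (Dx \<beta> f) differentiable_on UNIV)"

definition jbr :: "'v::real_normed_vector \<Rightarrow> real" where
  "jbr z = sqrt (1 + (norm z)^2)"

definition QBc :: "real \<Rightarrow> ((real^'n::finite) \<times> (real^'n)) set" where
  "QBc B = {(x, \<xi>). jbr x \<ge> B \<or> jbr \<xi> \<ge> B}"

datatype ultra_kind = Beurling | Roumieu

definition gamma_bound ::
  "(nat \<Rightarrow> real) \<Rightarrow> (nat \<Rightarrow> real) \<Rightarrow> real \<Rightarrow> ((real^'n::finite) \<times> (real^'n) \<Rightarrow> complex)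
     \<Rightarrow> real \<Rightarrow> real \<Rightarrow> bool" where
  "gamma_bound M A \<rho> a h m \<longleftrightarrow> (\<exists>C. \<forall>\<alpha> \<beta> x \<xi>.
     norm (Dxi \<alpha> (Dx \<beta> a) (x, \<xi>)) * jbr (x, \<xi>) powr (\<rho> * real (mi_abs (\<lambda>i. \<alpha> i + \<beta> i)))
       * exp (- assoc_fun M (m * norm x) - assoc_fun M (m * norm \<xi>))
       / (h ^ mi_abs (\<lambda>i. \<alpha> i + \<beta> i) * A (mi_abs \<alpha>) * A (mi_abs \<beta>)) \<le> C)"

definition Gamma_sym ::
  "ultra_kind \<Rightarrow> (nat \<Rightarrow> real) \<Rightarrow> (nat \<Rightarrow> real) \<Rightarrow> real
     \<Rightarrow> ((real^'n::finite) \<times> (real^'n) \<Rightarrow> complex) \<Rightarrow> bool" where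
  "Gamma_sym k M A \<rho> a \<longleftrightarrow> smooth2 a \<and>
     (case k of
        Beurling \<Rightarrow> (\<exists>m>0. \<forall>h>0. gamma_bound M A \<rho> a h m)
      | Roumieu \<Rightarrow> (\<exists>h>0. \<forall>m>0. gamma_bound M A \<rho> a h m))"

definition hypo_lower ::
  "ultra_kind \<Rightarrow> (nat \<Rightarrow> real) \<Rightarrow> real \<Rightarrow> ((real^'n::finite) \<times> (real^'n) \<Rightarrow> complex) \<Rightarrow> bool" where
  "hypo_lower k M B a \<longleftrightarrow>
     (let P = (\<lambda>c m. \<forall>x \<xi>. (x, \<xi>) \<in> QBc B \<longrightarrow>
                 norm (a (x, \<xi>)) \<ge> c * exp (- assoc_fun M (m * norm x) - assoc_fun M (m * norm \<xi>)))
      in case k of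
        Beurling \<Rightarrow> (\<exists>c>0. \<exists>m>0. P c m)
      | Roumieu \<Rightarrow> (\<forall>m>0. \<exists>c>0. P c m))"

definition deriv_est ::
  "(nat \<Rightarrow> real) \<Rightarrow> real \<Rightarrow> real \<Rightarrow> real \<Rightarrow> real \<Rightarrow> ((real^'n::finite) \<times> (real^'n) \<Rightarrow> complex) \<Rightarrow> bool" where
  "deriv_est A \<rho> B h C a \<longleftrightarrow> (\<forall>\<alpha> \<beta> z. z \<in> QBc B \<longrightarrow>
     norm (Dxi \<alpha> (Dx \<beta> a) z) \<le> C * h ^ (mi_abs \<alpha> + mi_abs \<beta>) * norm (a z)
        * A (mi_abs \<alpha>) * A (mi_abs \<beta>) / jbr z powr (\<rho> * real (mi_abs \<alpha> + mi_abs \<beta>)))"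

definition hypo_upper ::
  "ultra_kind \<Rightarrow> (nat \<Rightarrow> real) \<Rightarrow> real \<Rightarrow> real \<Rightarrow> ((real^'n::finite) \<times> (real^'n) \<Rightarrow> complex) \<Rightarrow> bool" where
  "hypo_upper k A \<rho> B a \<longleftrightarrow>
     (case k of
        Beurling \<Rightarrow> (\<forall>h>0. \<exists>C>0. deriv_est A \<rho> B h C a)
      | Roumieu \<Rightarrow> (\<exists>h>0. \<exists>C>0. deriv_est A \<rho> B h C a))"

definition hypoelliptic ::
  "ultra_kind \<Rightarrow> (nat \<Rightarrow> real) \<Rightarrow> (nat \<Rightarrow> real) \<Rightarrow> real
     \<Rightarrow> ((real^'n::finite) \<times> (real^'n) \<Rightarrow> complex) \<Rightarrow> bool" where
  "hypoelliptic k M A \<rho> a \<longleftrightarrow> Gamma_sym k M A \<rho> a \<and>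
     (\<exists>B>0. hypo_lower k M B a) \<and> (\<exists>B>0. hypo_upper k A \<rho> B a)"

end

theory Submission imports Defs "HOL-Library.Multiset" begin


primrec DL :: "'v::real_normed_vector list \<Rightarrow> ('v \<Rightarrow> complex) \<Rightarrow> 'v \<Rightarrow> complex" where
  "DL [] f = f" | "DL (v#vs) f = dirD v (DL vs f)"

lemma hvd_line:
  assumes "(f has_derivative f') (at (z + t0 *\<^sub>R v))"
  shows "((\<lambda>t. f (z + t *\<^sub>R v)) has_vector_derivative f' v) (at t0)"
proof -
  have l: "((\<lambda>t. z + t *\<^sub>R v) has_derivative (\<lambda>t. t *\<^sub>R v)) (at t0)"
    by (auto intro!: derivative_eq_intros)
  have "((\<lambda>t. f (z + t *\<^sub>R v)) has_derivative (\<lambda>t. f' (t *\<^sub>R v))) (at t0)"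
    using has_derivative_compose[OF l assms] by simp
  moreover have "bounded_linear f'" using assms has_derivative_bounded_linear by blast
  ultimately show ?thesis unfolding has_vector_derivative_def
    by (simp add: linear_simps)
qed

lemma dirD_eq:
  assumes "(f has_derivative f') (at y)"
  shows "dirD v f y = f' v"
  unfolding dirD_def
  by (rule vector_derivative_at, rule hvd_line[of f f' y 0 v]) (use assms in simp)

lemma dirD_hvd:
  assumes "f differentiable (at (z + t0 *\<^sub>R v))"
  shows "((\<lambda>t. f (z + t *\<^sub>R v)) has_vector_derivative dirD v f (z + t0 *\<^sub>R v)) (at t0)"
proof -
  obtain f' where f': "(f has_derivative f') (at (z + t0 *\<^sub>R v))"
    using assms unfolding differentiable_def by blast
  show ?thesis using hvd_line[OF f'] dirD_eq[OF f'] by simp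
qed

lemma dirD_hvd0:
  assumes "f differentiable (at z)"
  shows "((\<lambda>t. f (z + t *\<^sub>R v)) has_vector_derivative dirD v f z) (at 0)"
  using dirD_hvd[of f z 0 v] assms by simp

lemma hvd_cong_open:
  assumes "open S" "x \<in> S" "\<And>y. y \<in> S \<Longrightarrow> F y = G y"
  shows "(F has_vector_derivative d) (at x) \<longleftrightarrow> (G has_vector_derivative d) (at x)"
  using has_vector_derivative_transform_within_open[of F d x S G]
        has_vector_derivative_transform_within_open[of G d x S F] assms by auto

lemma dirD_local:
  assumes "open U" "z \<in> U" "\<And>x. x \<in> U \<Longrightarrow> f x = g x"
  shows "dirD v f z = dirD v g z"
proof -
  let ?S = "(\<lambda>t. z + t *\<^sub>R v) -` U"
  have oS: "open ?S"
    by (rule continuous_open_vimage[OF assms(1)]) (auto intro!: continuous_intros)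
  have 0: "0 \<in> ?S" using assms by simp
  have e: "\<And>y. y \<in> ?S \<Longrightarrow> f (z + y *\<^sub>R v) = g (z + y *\<^sub>R v)"
    using assms(3) by simp
  have "\<And>d. ((\<lambda>t. f (z + t *\<^sub>R v)) has_vector_derivative d) (at 0) \<longleftrightarrow>
            ((\<lambda>t. g (z + t *\<^sub>R v)) has_vector_derivative d) (at 0)"
    by (rule hvd_cong_open[OF oS 0 e])
  then show ?thesis unfolding dirD_def vector_derivative_def by simp
qed

lemma DL_local:
  assumes "open U" "\<And>x. x \<in> U \<Longrightarrow> f x = g x" "z \<in> U"
  shows "DL vs f z = DL vs g z"
  using assms(3)
proof (induction vs arbitrary: z)
  case Nil then show ?case using assms by simp
next
  case (Cons v vs) then show ?case using dirD_local[OF assms(1) Cons.prems, of "DL vs f" "DL vs g" v] by simp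
qed

lemma dirD_const: "dirD v (\<lambda>_. c) z = 0"
  unfolding dirD_def by (rule vector_derivative_at) (auto intro!: derivative_eq_intros)

lemma DL_const: "vs \<noteq> [] \<Longrightarrow> DL vs (\<lambda>_. c) = (\<lambda>_. 0)"
proof (induction vs)
  case Nil then show ?case by simp
next
  case (Cons v vs)
  show ?case
  proof (cases "vs = []")
    case True then show ?thesis by (simp add: dirD_const fun_eq_iff)
  next
    case False
    then have "DL vs (\<lambda>_. c) = (\<lambda>_. 0)" using Cons.IH by simp
    then show ?thesis by (intro ext) (simp add: dirD_const)
  qed
qed

lemma mvt_line:
  fixes \<phi> :: "real \<Rightarrow> 'b::real_normed_vector"
  assumes d: "\<And>t. t \<in> closed_segment s0 s1 \<Longrightarrow> (\<phi> has_vector_derivative \<phi>' t) (at t)"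
    and b: "\<And>t. t \<in> closed_segment s0 s1 \<Longrightarrow> norm (\<phi>' t) \<le> B"
  shows "norm (\<phi> s1 - \<phi> s0) \<le> B * \<bar>s1 - s0\<bar>"
proof -
  have "norm (\<phi> s1 - \<phi> s0) \<le> B * norm (s1 - s0)"
  proof (rule differentiable_bound[of "closed_segment s0 s1" \<phi> "\<lambda>t h. h *\<^sub>R \<phi>' t"])
    show "convex (closed_segment s0 s1)" by simp
    fix x assume x: "x \<in> closed_segment s0 s1"
    show "(\<phi> has_derivative (\<lambda>h. h *\<^sub>R \<phi>' x)) (at x within closed_segment s0 s1)"
      using d[OF x] unfolding has_vector_derivative_def by (rule has_derivative_at_withinI)
    have "onorm (\<lambda>h::real. h *\<^sub>R \<phi>' x) = onorm (\<lambda>h::real. h) * norm (\<phi>' x)"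
      by (rule onorm_scaleR_left) (rule bounded_linear_ident)
    then show "onorm (\<lambda>h. h *\<^sub>R \<phi>' x) \<le> B" using b[OF x] by (simp add: onorm_id)
  qed auto
  then show ?thesis by simp
qed

lemma deriv_bound:
  fixes g :: "real \<Rightarrow> 'b::real_normed_vector"
  assumes g: "(g has_vector_derivative g') (at 0)" and \<delta>: "\<delta> > 0"
    and b: "\<And>t. \<bar>t\<bar> < \<delta> \<Longrightarrow> norm (g t - g 0 - t *\<^sub>R X) \<le> e * \<bar>t\<bar>"
  shows "norm (g' - X) \<le> e"
proof (rule field_le_epsilon)
  fix \<eta> :: real assume \<eta>: "\<eta> > 0"
  from g have "(g has_derivative (\<lambda>h. h *\<^sub>R g')) (at 0)" unfolding has_vector_derivative_def .
  then obtain d where d: "d > 0" "\<And>y. norm (y - 0) < d \<Longrightarrow> norm (g y - g 0 - (y - 0) *\<^sub>R g') \<le> \<eta> * norm (y - 0)"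
    unfolding has_derivative_at_alt using \<eta> by blast
  define t where "t = min d \<delta> / 2"
  have t: "t > 0" "t < d" "t < \<delta>" using d \<delta> by (auto simp: t_def)
  have 1: "norm (g t - g 0 - t *\<^sub>R g') \<le> \<eta> * t" using d(2)[of t] t by simp
  have 2: "norm (g t - g 0 - t *\<^sub>R X) \<le> e * t" using b[of t] t by simp
  have "t *\<^sub>R (g' - X) = (g t - g 0 - t *\<^sub>R X) - (g t - g 0 - t *\<^sub>R g')"
    by (simp add: algebra_simps)
  then have "t * norm (g' - X) \<le> norm (g t - g 0 - t *\<^sub>R X) + norm (g t - g 0 - t *\<^sub>R g')"
    using t norm_triangle_ineq4 by (metis abs_of_pos norm_scaleR)
  also have "\<dots> \<le> t * (e + \<eta>)" using 1 2 by (simp add: algebra_simps)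
  finally show "norm (g' - X) \<le> e + \<eta>" using t by simp
qed

lemma schwarz:
  fixes f :: "'v::real_normed_vector \<Rightarrow> complex"
  assumes df: "\<And>x. f differentiable (at x)"
    and du: "\<And>x. dirD u f differentiable (at x)"
    and dv: "\<And>x. dirD v f differentiable (at x)"
    and cont: "continuous_on UNIV (dirD v (dirD u f))"
  shows "dirD u (dirD v f) z = dirD v (dirD u f) z"
proof -
  define c where "c = dirD v (dirD u f) z"
  define Fu where "Fu = dirD u f"
  have key: "norm (dirD u (dirD v f) z - c) \<le> \<epsilon>" if \<epsilon>: "\<epsilon> > 0" for \<epsilon>
  proof -
    have "isCont (dirD v Fu) z" using cont unfolding Fu_def
      by (simp add: continuous_on_eq_continuous_at)
    then obtain d where d: "d > 0" "\<And>p. dist p z < d \<Longrightarrow> dist (dirD v Fu p) c < \<epsilon>"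
      unfolding continuous_at_eps_delta c_def Fu_def using \<epsilon> by blast
    define \<delta> where "\<delta> = d / (norm u + norm v + 1)"
    have nn: "norm u + norm v + 1 > 0" using norm_ge_zero[of u] norm_ge_zero[of v] by linarith
    have \<delta>: "\<delta> > 0" using d nn by (simp add: \<delta>_def)
    have near: "dist (z + \<sigma> *\<^sub>R u + r *\<^sub>R v) z < d" if s: "\<bar>\<sigma>\<bar> < \<delta>" "\<bar>r\<bar> < \<delta>" for \<sigma> r
    proof -
      have "dist (z + \<sigma> *\<^sub>R u + r *\<^sub>R v) z = norm (\<sigma> *\<^sub>R u + r *\<^sub>R v)"
        by (simp add: dist_norm)
      also have "\<dots> \<le> \<bar>\<sigma>\<bar> * norm u + \<bar>r\<bar> * norm v"
        using norm_triangle_ineq[of "\<sigma> *\<^sub>R u" "r *\<^sub>R v"] by simp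
      also have "\<dots> \<le> \<delta> * norm u + \<delta> * norm v"
        using s by (intro add_mono mult_right_mono) auto
      also have "\<dots> < \<delta> * (norm u + norm v + 1)" using \<delta> by (simp add: algebra_simps)
      also have "\<dots> = d" using nn by (simp add: \<delta>_def)
      finally show ?thesis .
    qed
    have seg: "\<bar>\<sigma>\<bar> \<le> \<bar>s\<bar>" if "\<sigma> \<in> closed_segment 0 s" for \<sigma> s :: real
      using that by (auto simp: closed_segment_eq_real_ivl split: if_splits)
    have lin: "((\<lambda>r. r *\<^sub>R c) has_vector_derivative c) (at r)" for r :: real and c :: complex
      unfolding has_vector_derivative_def by (rule bounded_linear.has_derivative[OF bounded_linear_scaleR_left]) simp
    have step1: "norm ((f (z + s *\<^sub>R u + t *\<^sub>R v) - f (z + s *\<^sub>R u) - f (z + t *\<^sub>R v) + f z)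
                   - (s * t) *\<^sub>R c) \<le> \<epsilon> * \<bar>t\<bar> * \<bar>s\<bar>"
      if st: "\<bar>s\<bar> < \<delta>" "\<bar>t\<bar> < \<delta>" for s t
    proof -
      have psi: "norm ((Fu (z + \<sigma> *\<^sub>R u + t *\<^sub>R v) - t *\<^sub>R c) - (Fu (z + \<sigma> *\<^sub>R u + 0 *\<^sub>R v) - 0 *\<^sub>R c))
                 \<le> \<epsilon> * \<bar>t - 0\<bar>" if \<sigma>: "\<sigma> \<in> closed_segment 0 s" for \<sigma>
      proof (rule mvt_line[of 0 t "\<lambda>r. Fu (z + \<sigma> *\<^sub>R u + r *\<^sub>R v) - r *\<^sub>R c"
                               "\<lambda>r. dirD v Fu (z + \<sigma> *\<^sub>R u + r *\<^sub>R v) - c"])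
        fix r assume r: "r \<in> closed_segment 0 t"
        show "((\<lambda>r. Fu (z + \<sigma> *\<^sub>R u + r *\<^sub>R v) - r *\<^sub>R c) has_vector_derivative
                dirD v Fu (z + \<sigma> *\<^sub>R u + r *\<^sub>R v) - c) (at r)"
          using dirD_hvd[of Fu "z + \<sigma> *\<^sub>R u" r v] du unfolding Fu_def
          by (intro has_vector_derivative_diff lin) auto
        have "\<bar>\<sigma>\<bar> < \<delta>" "\<bar>r\<bar> < \<delta>" using seg[OF \<sigma>] seg[OF r] st by auto
        then have "dist (dirD v Fu (z + \<sigma> *\<^sub>R u + r *\<^sub>R v)) c < \<epsilon>" using d(2) near by blast
        then show "norm (dirD v Fu (z + \<sigma> *\<^sub>R u + r *\<^sub>R v) - c) \<le> \<epsilon>" by (simp add: dist_norm)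
      qed
      have "norm ((f (z + t *\<^sub>R v + s *\<^sub>R u) - f (z + s *\<^sub>R u) - (s * t) *\<^sub>R c)
                - (f (z + t *\<^sub>R v + 0 *\<^sub>R u) - f (z + 0 *\<^sub>R u) - (0 * t) *\<^sub>R c))
            \<le> (\<epsilon> * \<bar>t\<bar>) * \<bar>s - 0\<bar>"
      proof (rule mvt_line[of 0 s "\<lambda>\<sigma>. f (z + t *\<^sub>R v + \<sigma> *\<^sub>R u) - f (z + \<sigma> *\<^sub>R u) - (\<sigma> * t) *\<^sub>R c"
                               "\<lambda>\<sigma>. Fu (z + t *\<^sub>R v + \<sigma> *\<^sub>R u) - Fu (z + \<sigma> *\<^sub>R u) - t *\<^sub>R c"])
        fix \<sigma> assume \<sigma>: "\<sigma> \<in> closed_segment 0 s"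
        have l2: "((\<lambda>\<sigma>. (\<sigma> * t) *\<^sub>R c) has_vector_derivative t *\<^sub>R c) (at \<sigma>)"
          using lin[where r=\<sigma> and c="t *\<^sub>R c"] by (simp add: mult.commute)
        show "((\<lambda>\<sigma>. f (z + t *\<^sub>R v + \<sigma> *\<^sub>R u) - f (z + \<sigma> *\<^sub>R u) - (\<sigma> * t) *\<^sub>R c) has_vector_derivative
               Fu (z + t *\<^sub>R v + \<sigma> *\<^sub>R u) - Fu (z + \<sigma> *\<^sub>R u) - t *\<^sub>R c) (at \<sigma>)"
          unfolding Fu_def
          by (intro has_vector_derivative_diff l2 dirD_hvd df)
        have e1: "z + t *\<^sub>R v + \<sigma> *\<^sub>R u = z + \<sigma> *\<^sub>R u + t *\<^sub>R v" by (simp add: algebra_simps)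
        show "norm (Fu (z + t *\<^sub>R v + \<sigma> *\<^sub>R u) - Fu (z + \<sigma> *\<^sub>R u) - t *\<^sub>R c) \<le> \<epsilon> * \<bar>t\<bar>"
          using psi[OF \<sigma>] unfolding e1 by (simp add: algebra_simps)
      qed
      moreover have "z + t *\<^sub>R v + s *\<^sub>R u = z + s *\<^sub>R u + t *\<^sub>R v" by (simp add: algebra_simps)
      ultimately show ?thesis by (simp add: algebra_simps)
    qed
    have step2: "norm ((dirD v f (z + s *\<^sub>R u) - dirD v f z) - s *\<^sub>R c) \<le> \<epsilon> * \<bar>s\<bar>"
      if s: "\<bar>s\<bar> < \<delta>" for s
    proof (rule deriv_bound[OF _ \<delta>, of "\<lambda>t. f (z + s *\<^sub>R u + t *\<^sub>R v) - f (z + t *\<^sub>R v)"])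
      show "((\<lambda>t. f (z + s *\<^sub>R u + t *\<^sub>R v) - f (z + t *\<^sub>R v)) has_vector_derivative
              dirD v f (z + s *\<^sub>R u) - dirD v f z) (at 0)"
        by (intro has_vector_derivative_diff dirD_hvd0 df)
      fix t :: real assume t: "\<bar>t\<bar> < \<delta>"
      have "norm ((f (z + s *\<^sub>R u + t *\<^sub>R v) - f (z + s *\<^sub>R u) - f (z + t *\<^sub>R v) + f z)
                   - (s * t) *\<^sub>R c) \<le> \<epsilon> * \<bar>t\<bar> * \<bar>s\<bar>" using step1[OF s t] .
      then show "norm (f (z + s *\<^sub>R u + t *\<^sub>R v) - f (z + t *\<^sub>R v) -
               (f (z + s *\<^sub>R u + 0 *\<^sub>R v) - f (z + 0 *\<^sub>R v)) - t *\<^sub>R s *\<^sub>R c) \<le> \<epsilon> * \<bar>s\<bar> * \<bar>t\<bar>"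
        by (simp add: algebra_simps)
    qed
    show ?thesis
    proof (rule deriv_bound[OF _ \<delta>, of "\<lambda>s. dirD v f (z + s *\<^sub>R u)"])
      show "((\<lambda>s. dirD v f (z + s *\<^sub>R u)) has_vector_derivative dirD u (dirD v f) z) (at 0)"
        by (intro dirD_hvd0 dv)
      fix s :: real assume "\<bar>s\<bar> < \<delta>"
      then show "norm (dirD v f (z + s *\<^sub>R u) - dirD v f (z + 0 *\<^sub>R u) - s *\<^sub>R c) \<le> \<epsilon> * \<bar>s\<bar>"
        using step2 by simp
    qed
  qed
  have "norm (dirD u (dirD v f) z - c) \<le> 0"
    by (rule field_le_epsilon) (use key in simp)
  then show ?thesis by (simp add: c_def)
qed

lemma comm:
  fixes f :: "'v::real_normed_vector \<Rightarrow> complex" and E :: "'v set"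
    and canon :: "'v multiset \<Rightarrow> 'v list"
  assumes cm: "\<And>M. set_mset M \<subseteq> E \<Longrightarrow> mset (canon M) = M"
    and H: "\<And>M x. set_mset M \<subseteq> E \<Longrightarrow> DL (canon M) f differentiable (at x)"
  shows "L \<in> lists E \<Longrightarrow> DL L f = DL (canon (mset L)) f"
proof (induction "length L" arbitrary: L rule: less_induct)
  case less
  have D1: "DL L' f differentiable (at x)" if "L' \<in> lists E" "length L' < length L" for L' x
    using less.hyps[OF that(2) that(1)] H[of "mset L'" x] that(1) by auto
  have D2: "DL L1 f = DL L2 f" if "L1 \<in> lists E" "L2 \<in> lists E" "length L1 < length L"
     "mset L1 = mset L2" for L1 L2
  proof -
    have "length L2 < length L" using that mset_eq_length by metis
    then show ?thesis using less.hyps that by metis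
  qed
  have LE: "set_mset (mset L) \<subseteq> E" using less.prems by auto
  show ?case
  proof (cases L)
    case Nil
    have "mset (canon (mset L)) = {#}" using cm[OF LE] Nil by simp
    then show ?thesis using Nil by simp
  next
    case (Cons v ws)
    define c where "c = canon (mset L)"
    have mc: "mset c = mset L" using cm[OF LE] c_def by simp
    then obtain w cs where c: "c = w # cs" using Cons by (cases c) auto
    have setc: "set c = set L" using mc by (metis set_mset_mset)
    have ws: "ws \<in> lists E" "v \<in> E" using less.prems Cons by auto
    have cs: "cs \<in> lists E" "w \<in> E" using setc c less.prems by auto
    have m1: "add_mset w (mset cs) = add_mset v (mset ws)" using mc c Cons by simp
    show ?thesis
    proof (cases "v = w")
      case True
      then have "mset cs = mset ws" using m1 by simp
      then have "DL cs f = DL ws f" using D2[OF cs(1) ws(1)] Cons c mc mset_eq_length by (metis length_Cons lessI)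
      then show ?thesis using c c_def Cons True by simp
    next
      case False
      have wws: "w \<in> set ws" using m1 False
        by (metis add_mset_remove_trivial_eq insert_noteq_member set_mset_mset union_single_eq_member)
      define rest where "rest = remove1 w ws"
      have mws: "mset ws = mset (w # rest)" using wws by (simp add: rest_def)
      have mcs: "mset cs = mset (v # rest)" using m1 mws by (simp add: add_mset_commute)
      have rE: "rest \<in> lists E" using ws(1) by (auto simp: rest_def dest: in_set_remove1[THEN iffD1, rotated] notin_set_remove1)
      have lens: "length ws < length L" "length (w # rest) = length ws" "length (v # rest) = length ws"
          "length rest < length L" "length cs = length ws"
        using Cons mws mcs mset_eq_length c mc by (fastforce)+
      define g where "g = DL rest f"
      have e1: "DL ws f = dirD w g" using D2[OF ws(1), of "w # rest"] lens mws rE cs by (simp add: g_def)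
      have e2: "DL cs f = dirD v g" using D2[OF cs(1), of "v # rest"] lens mcs rE ws by (simp add: g_def)
      have dg: "g differentiable (at x)" for x using D1[OF rE lens(4)] g_def by simp
      have dwg: "dirD w g differentiable (at x)" for x using D1[OF ws(1) lens(1)] e1 by simp
      have dvg: "dirD v g differentiable (at x)" for x
        using D1[OF cs(1)] lens e2 by simp
      have "DL c f differentiable (at x)" for x using H[OF LE] c_def by simp
      then have "continuous_on UNIV (DL c f)"
        by (simp add: differentiable_at_imp_differentiable_on differentiable_imp_continuous_on)
      then have cont: "continuous_on UNIV (dirD w (dirD v g))" using c e2 by simp
      have "dirD v (dirD w g) z = dirD w (dirD v g) z" for z
        by (rule schwarz[OF dg dvg dwg cont])
      moreover have "DL L f = dirD v (dirD w g)" using Cons e1 by simp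
      moreover have "DL c f = dirD w (dirD v g)" using c e2 by simp
      ultimately have "DL L f = DL c f" by auto
      then show ?thesis using c_def by simp
    qed
  qed
qed

definition sel :: "bool list \<Rightarrow> 'a list \<Rightarrow> 'a list" where
  "sel bs vs = map snd (filter fst (zip bs vs))"
definition seln :: "bool list \<Rightarrow> 'a list \<Rightarrow> 'a list" where
  "seln bs vs = sel (map Not bs) vs"
definition masks :: "nat \<Rightarrow> bool list set" where
  "masks n = {bs. length bs = n}"
definition cnt :: "bool list \<Rightarrow> nat" where
  "cnt bs = length (filter id bs)"

lemma sel_simps[simp]:
  "sel [] vs = []" "sel bs [] = []"
  "sel (True # bs) (v # vs) = v # sel bs vs" "sel (False # bs) (v # vs) = sel bs vs"
  "seln [] vs = []" "seln bs [] = []"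
  "seln (True # bs) (v # vs) = seln bs vs" "seln (False # bs) (v # vs) = v # seln bs vs"
  by (auto simp: sel_def seln_def)

lemma cnt_simps[simp]: "cnt [] = 0" "cnt (True # bs) = Suc (cnt bs)" "cnt (False # bs) = cnt bs"
  by (auto simp: cnt_def)

lemma cnt_le: "cnt bs \<le> length bs" unfolding cnt_def by simp

lemma sel_len: "length bs = length vs \<Longrightarrow> length (sel bs vs) = cnt bs \<and> length (seln bs vs) = length vs - cnt bs"
proof (induction bs arbitrary: vs)
  case Nil then show ?case by simp
next
  case (Cons b bs)
  then obtain v vs' where vs: "vs = v # vs'" by (cases vs) auto
  have "cnt bs \<le> length bs" unfolding cnt_def by simp
  then show ?case using Cons vs by (cases b) auto
qed

lemma sel_set: "set (sel bs vs) \<subseteq> set vs" "set (seln bs vs) \<subseteq> set vs"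
  unfolding sel_def seln_def by (auto dest: set_zip_rightD)

lemma finite_masks: "finite (masks n)"
  using finite_lists_length_eq[of "UNIV :: bool set" n] by (simp add: masks_def)

lemma masks_Suc: "masks (Suc n) = Cons True ` masks n \<union> Cons False ` masks n"
proof -
  have "bs \<in> Cons True ` masks n \<union> Cons False ` masks n" if l: "length bs = Suc n" for bs
  proof -
    obtain b bs' where "bs = b # bs'" "length bs' = n" using l by (auto simp: length_Suc_conv)
    then show ?thesis by (cases b) (auto simp: masks_def)
  qed
  then show ?thesis by (auto simp: masks_def)
qed

lemma sum_masks_Suc:
  "(\<Sum>bs\<in>masks (Suc n). F bs) = (\<Sum>bs\<in>masks n. F (True # bs)) + (\<Sum>bs\<in>masks n. F (False # bs))"
proof -
  have "(\<Sum>bs\<in>masks (Suc n). F bs) = (\<Sum>bs\<in>Cons True ` masks n. F bs) + (\<Sum>bs\<in>Cons False ` masks n. F bs)"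
    unfolding masks_Suc by (rule sum.union_disjoint) (auto simp: finite_masks)
  also have "\<dots> = (\<Sum>bs\<in>masks n. F (True # bs)) + (\<Sum>bs\<in>masks n. F (False # bs))"
    by (simp add: sum.reindex)
  finally show ?thesis .
qed

lemma sum_masks_cnt: "(\<Sum>bs\<in>masks n. F (cnt bs)) = (\<Sum>j\<le>n. real (n choose j) * F j)"
proof (induction n arbitrary: F)
  case 0
  have "masks 0 = {[]}" by (auto simp: masks_def)
  then show ?case by simp
next
  case (Suc n)
  have "(\<Sum>bs\<in>masks (Suc n). F (cnt bs)) = (\<Sum>bs\<in>masks n. F (Suc (cnt bs))) + (\<Sum>bs\<in>masks n. F (cnt bs))"
    by (simp add: sum_masks_Suc)
  also have "\<dots> = (\<Sum>j\<le>n. real (n choose j) * F (Suc j)) + (\<Sum>j\<le>n. real (n choose j) * F j)"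
    using Suc.IH[of "\<lambda>j. F (Suc j)"] Suc.IH[of F] by simp
  also have "(\<Sum>j\<le>n. real (n choose j) * F j) = F 0 + (\<Sum>j\<le>n. real (n choose Suc j) * F (Suc j))"
  proof -
    have "(\<Sum>j\<le>Suc n. real (n choose j) * F j) = F 0 + (\<Sum>j\<le>n. real (n choose Suc j) * F (Suc j))"
      by (subst sum.atMost_Suc_shift) simp
    then show ?thesis by (simp add: binomial_eq_0)
  qed
  also have "(\<Sum>j\<le>n. real (n choose j) * F (Suc j)) + (F 0 + (\<Sum>j\<le>n. real (n choose Suc j) * F (Suc j)))
      = F 0 + (\<Sum>j\<le>n. real (Suc n choose Suc j) * F (Suc j))"
    by (simp add: sum.distrib[symmetric] algebra_simps)
  also have "\<dots> = (\<Sum>j\<le>Suc n. real (Suc n choose j) * F j)"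
    by (subst sum.atMost_Suc_shift) simp
  finally show ?case .
qed

lemma dirD_sum_prod:
  assumes "finite S" "\<And>b. b \<in> S \<Longrightarrow> P b differentiable (at z)" "\<And>b. b \<in> S \<Longrightarrow> Q b differentiable (at z)"
  shows "dirD v (\<lambda>x. \<Sum>b\<in>S. P b x * Q b x) z = (\<Sum>b\<in>S. dirD v (P b) z * Q b z + P b z * dirD v (Q b) z)"
proof -
  have "((\<lambda>t. \<Sum>b\<in>S. P b (z + t *\<^sub>R v) * Q b (z + t *\<^sub>R v)) has_vector_derivative
          (\<Sum>b\<in>S. P b (z + 0 *\<^sub>R v) * dirD v (Q b) z + dirD v (P b) z * Q b (z + 0 *\<^sub>R v))) (at 0)"
    by (intro has_vector_derivative_sum has_vector_derivative_mult dirD_hvd0 assms)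
  then show ?thesis unfolding dirD_def[of v "\<lambda>x. \<Sum>b\<in>S. P b x * Q b x"]
    by (subst vector_derivative_at) (auto simp: algebra_simps)
qed

lemma leibniz:
  assumes U: "open U"
    and df: "\<And>ws x. ws \<in> lists E \<Longrightarrow> length ws < length vs \<Longrightarrow> x \<in> U \<Longrightarrow> DL ws f differentiable (at x)"
    and dg: "\<And>ws x. ws \<in> lists E \<Longrightarrow> length ws < length vs \<Longrightarrow> x \<in> U \<Longrightarrow> DL ws g differentiable (at x)"
    and vs: "vs \<in> lists E" and z: "z \<in> U"
  shows "DL vs (\<lambda>x. f x * g x) z = (\<Sum>bs\<in>masks (length vs). DL (sel bs vs) f z * DL (seln bs vs) g z)"
  using df dg vs z
proof (induction vs arbitrary: z)
  case Nil
  have "masks 0 = {[]}" by (auto simp: masks_def)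
  then show ?case by simp
next
  case (Cons v vs)
  have vsE: "vs \<in> lists E" using Cons.prems by simp
  have IH: "DL vs (\<lambda>x. f x * g x) x = (\<Sum>bs\<in>masks (length vs). DL (sel bs vs) f x * DL (seln bs vs) g x)"
    if "x \<in> U" for x
    by (rule Cons.IH) (use Cons.prems that in auto)
  have subl: "sel bs vs \<in> lists E" "length (sel bs vs) < length (v # vs)"
     "seln bs vs \<in> lists E" "length (seln bs vs) < length (v # vs)" if "bs \<in> masks (length vs)" for bs
  proof -
    have l: "length bs = length vs" using that by (simp add: masks_def)
    have c: "cnt bs \<le> length vs" using cnt_le[of bs] l by simp
    show "sel bs vs \<in> lists E" "seln bs vs \<in> lists E" using sel_set[of bs vs] vsE by auto
    show "length (sel bs vs) < length (v # vs)" "length (seln bs vs) < length (v # vs)"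
      using sel_len[OF l] c by auto
  qed
  have "DL (v # vs) (\<lambda>x. f x * g x) z = dirD v (\<lambda>x. \<Sum>bs\<in>masks (length vs). DL (sel bs vs) f x * DL (seln bs vs) g x) z"
    using dirD_local[OF U Cons.prems(4) IH] by simp
  also have "\<dots> = (\<Sum>bs\<in>masks (length vs). dirD v (DL (sel bs vs) f) z * DL (seln bs vs) g z
                     + DL (sel bs vs) f z * dirD v (DL (seln bs vs) g) z)"
    by (rule dirD_sum_prod[OF finite_masks]) (use subl Cons.prems in auto)
  also have "\<dots> = (\<Sum>bs\<in>masks (length (v # vs)). DL (sel bs (v # vs)) f z * DL (seln bs (v # vs)) g z)"
    by (simp add: sum_masks_Suc sum.distrib)
  finally show ?case .
qed

lemma DL_append: "DL (xs @ ys) f = DL xs (DL ys f)"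
  by (induction xs) auto

fun lstaux :: "nat \<Rightarrow> ('n::finite \<Rightarrow> 'v) \<Rightarrow> ('n \<Rightarrow> nat) \<Rightarrow> 'v list" where
  "lstaux 0 e \<alpha> = []"
| "lstaux (Suc k) e \<alpha> =
     (if \<alpha> = (\<lambda>_. 0) then [] else (let i = (SOME i. \<alpha> i \<noteq> 0) in e i # lstaux k e (\<alpha>(i := \<alpha> i - 1))))"

lemma pder_aux_DL: "pder_aux k e \<alpha> f = DL (lstaux k e \<alpha>) f"
  by (induction k arbitrary: \<alpha>) (auto simp: Let_def)

definition lst :: "('n::finite \<Rightarrow> 'v) \<Rightarrow> ('n \<Rightarrow> nat) \<Rightarrow> 'v list" where
  "lst e \<alpha> = lstaux (mi_abs \<alpha>) e \<alpha>"

lemma pder_DL: "pder e \<alpha> f = DL (lst e \<alpha>) f"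
  unfolding pder_def lst_def pder_aux_DL ..

lemma mi_abs_zero: "mi_abs \<alpha> = 0 \<longleftrightarrow> \<alpha> = (\<lambda>_. 0)"
  unfolding mi_abs_def by (auto simp: fun_eq_iff)

lemma mi_abs_dec: "\<alpha> i \<noteq> 0 \<Longrightarrow> mi_abs (\<alpha>(i := \<alpha> i - 1)) + 1 = mi_abs \<alpha>"
proof -
  assume a: "\<alpha> i \<noteq> 0"
  have "mi_abs \<alpha> = \<alpha> i + (\<Sum>j\<in>UNIV - {i}. \<alpha> j)" unfolding mi_abs_def
    by (rule sum.remove) auto
  moreover have "mi_abs (\<alpha>(i := \<alpha> i - 1)) = (\<alpha> i - 1) + (\<Sum>j\<in>UNIV - {i}. \<alpha> j)" unfolding mi_abs_def
    by (subst sum.remove[of _ i]) auto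
  ultimately show ?thesis using a by simp
qed

lemma mi_abs_add: "mi_abs (\<lambda>i. \<alpha> i + \<beta> i) = mi_abs \<alpha> + mi_abs \<beta>"
  unfolding mi_abs_def by (simp add: sum.distrib)

lemma lst_props:
  assumes "mi_abs \<alpha> = m"
  shows "length (lst e \<alpha>) = m \<and> set (lst e \<alpha>) \<subseteq> range e \<and>
         (inj e \<longrightarrow> (\<forall>j. count (mset (lst e \<alpha>)) (e j) = \<alpha> j)) \<and>
         (\<forall>k. \<exists>\<alpha>'. drop k (lst e \<alpha>) = lst e \<alpha>')"
  using assms
proof (induction m arbitrary: \<alpha>)
  case 0
  then have "\<alpha> = (\<lambda>_. 0)" using mi_abs_zero by auto
  moreover have "lst e (\<lambda>_. 0) = []" by (simp add: lst_def mi_abs_def)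
  ultimately show ?case by (auto intro: exI[of _ "\<lambda>_. 0"])
next
  case (Suc m)
  have nz: "\<alpha> \<noteq> (\<lambda>_. 0)" using mi_abs_zero[of \<alpha>] Suc.prems by auto
  then have "\<exists>i. \<alpha> i \<noteq> 0" by auto
  define i where "i = (SOME i. \<alpha> i \<noteq> 0)"
  have i: "\<alpha> i \<noteq> 0" unfolding i_def by (rule someI_ex) fact
  define \<alpha>' where "\<alpha>' = \<alpha>(i := \<alpha> i - 1)"
  have m': "mi_abs \<alpha>' = m" using mi_abs_dec[of \<alpha> i, OF i] Suc.prems by (simp add: \<alpha>'_def)
  have "lst e \<alpha> = lstaux (Suc m) e \<alpha>" by (simp add: lst_def Suc.prems)
  also have "\<dots> = e i # lstaux m e \<alpha>'"
    by (simp only: lstaux.simps Let_def i_def[symmetric] \<alpha>'_def[symmetric] if_not_P[OF nz])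
  finally have L: "lst e \<alpha> = e i # lst e \<alpha>'" using m' by (simp add: lst_def)
  note IH = Suc.IH[OF m']
  have c: "count (mset (lst e \<alpha>)) (e j) = \<alpha> j" if inj: "inj e" for j
  proof (cases "j = i")
    case True
    have "\<alpha>' i = \<alpha> i - 1" by (simp add: \<alpha>'_def)
    then show ?thesis using IH inj i L True by simp
  next
    case False
    then have "e i \<noteq> e j" using inj by (auto dest: injD)
    moreover have "\<alpha>' j = \<alpha> j" using False by (simp add: \<alpha>'_def)
    ultimately show ?thesis using IH inj L by simp
  qed
  have d: "\<exists>\<beta>. drop k (lst e \<alpha>) = lst e \<beta>" for k
  proof (cases k)
    case 0 then show ?thesis by auto
  next
    case (Suc k') then show ?thesis using IH L by simp
  qed
  show ?case using IH L c d by auto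
qed

definition ex :: "'n::finite \<Rightarrow> (real^'n) \<times> (real^'n)" where "ex i = (axis i 1, 0)"
definition exi :: "'n::finite \<Rightarrow> (real^'n) \<times> (real^'n)" where "exi i = (0, axis i 1)"
definition EE :: "((real^'n::finite) \<times> (real^'n)) set" where "EE = range ex \<union> range exi"

lemma inj_ex: "inj ex" unfolding ex_def by (auto intro!: injI simp: axis_eq_axis)
lemma inj_exi: "inj exi" unfolding exi_def by (auto intro!: injI simp: axis_eq_axis)
lemma ex_exi: "ex i \<noteq> exi j" unfolding ex_def exi_def by simp

definition canon :: "((real^'n::finite) \<times> (real^'n)) multiset \<Rightarrow> ((real^'n) \<times> (real^'n)) list" where
  "canon M = lst exi (\<lambda>i. count M (exi i)) @ lst ex (\<lambda>i. count M (ex i))"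

lemma canon_mset: "set_mset M \<subseteq> EE \<Longrightarrow> mset (canon M) = M"
proof -
  assume ME: "set_mset M \<subseteq> EE"
  let ?a = "\<lambda>i. count M (exi i)" and ?b = "\<lambda>i. count M (ex i)"
  have pa: "set (lst exi ?a) \<subseteq> range exi" "\<forall>j. count (mset (lst exi ?a)) (exi j) = ?a j"
    using lst_props[of ?a _ exi] inj_exi by auto
  have pb: "set (lst ex ?b) \<subseteq> range ex" "\<forall>j. count (mset (lst ex ?b)) (ex j) = ?b j"
    using lst_props[of ?b _ ex] inj_ex by auto
  have "count (mset (canon M)) v = count M v" for v
  proof (cases "v \<in> EE")
    case True
    then consider j where "v = ex j" | j where "v = exi j" unfolding EE_def by auto
    then show ?thesis
    proof cases
      case 1
      have "ex j \<notin> range exi" using ex_exi by (metis rangeE)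
      then have "v \<notin> set (lst exi ?a)" using pa(1) 1 by blast
      then show ?thesis using pb 1 by (simp add: canon_def count_mset_0_iff)
    next
      case 2
      have "exi j \<notin> range ex" using ex_exi by (metis rangeE)
      then have "v \<notin> set (lst ex ?b)" using pb(1) 2 by blast
      then show ?thesis using pa 2 by (simp add: canon_def count_mset_0_iff)
    qed
  next
    case False
    then have "v \<notin> set (canon M)" using pa(1) pb(1) by (auto simp: canon_def EE_def)
    moreover have "v \<notin># M" using False ME by auto
    ultimately show ?thesis by (simp add: count_mset_0_iff not_in_iff)
  qed
  then show ?thesis by (simp add: multiset_eq_iff)
qed

lemma dirD_scale:
  fixes H :: "'a::real_normed_vector \<Rightarrow> complex"
  assumes "H differentiable (at x)"
  shows "dirD v (\<lambda>z. c * H z) x = c * dirD v H x"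
  unfolding dirD_def[of v "\<lambda>z. c * H z"]
  by (rule vector_derivative_at) (use has_vector_derivative_mult_right[OF dirD_hvd0[OF assms]] in simp)

lemma diff_scale:
  fixes H :: "'a::real_normed_vector \<Rightarrow> complex"
  assumes "H differentiable (at x)"
  shows "(\<lambda>z. c * H z) differentiable (at x)"
proof -
  obtain H' where "(H has_derivative H') (at x)" using assms unfolding differentiable_def by blast
  from has_derivative_mult_right[OF this, of c] show ?thesis unfolding differentiable_def by blast
qed

lemma diff_open_eq:
  assumes "open U" "x \<in> U" "\<And>y. y \<in> U \<Longrightarrow> F y = G y" "F differentiable (at x)"
  shows "G differentiable (at x)"
proof -
  obtain F' where "(F has_derivative F') (at x)" using assms unfolding differentiable_def by blast
  from has_derivative_transform_within_open[OF this assms(1,2)] assms(3)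
  show ?thesis unfolding differentiable_def by blast
qed

lemma DL_scale:
  assumes U: "open U" and c: "c \<noteq> 0"
    and H: "\<And>k x. 1 \<le> k \<Longrightarrow> k \<le> length L \<Longrightarrow> x \<in> U \<Longrightarrow>
              DL (drop k L) G differentiable (at x) \<or> DL (drop k L) (\<lambda>z. c * G z) differentiable (at x)"
  shows "x \<in> U \<Longrightarrow> DL L (\<lambda>z. c * G z) x = c * DL L G x"
  using H
proof (induction L arbitrary: x)
  case Nil then show ?case by simp
next
  case (Cons v ws)
  have IH: "DL ws (\<lambda>z. c * G z) y = c * DL ws G y" if "y \<in> U" for y
  proof (rule Cons.IH[OF that])
    fix k x assume "1 \<le> k" "k \<le> length ws" "x \<in> U"
    then show "DL (drop k ws) G differentiable (at x) \<or> DL (drop k ws) (\<lambda>z. c * G z) differentiable (at x)"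
      using Cons.prems(2)[of "Suc k" x] by simp
  qed
  have dws: "DL ws G differentiable (at x)"
  proof -
    have "DL ws G differentiable (at x) \<or> DL ws (\<lambda>z. c * G z) differentiable (at x)"
      using Cons.prems(2)[of 1 x] Cons.prems(1) by simp
    then show ?thesis
    proof
      assume "DL ws (\<lambda>z. c * G z) differentiable (at x)"
      then have dd: "(\<lambda>y. inverse c * DL ws (\<lambda>z. c * G z) y) differentiable (at x)" by (rule diff_scale)
      show ?thesis by (rule diff_open_eq[OF U Cons.prems(1) _ dd]) (use IH c in simp)
    qed
  qed
  have "DL (v # ws) (\<lambda>z. c * G z) x = dirD v (\<lambda>y. c * DL ws G y) x"
    using dirD_local[OF U Cons.prems(1) IH] by simp
  also have "\<dots> = c * DL (v # ws) G x" using dirD_scale[OF dws] by simp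
  finally show ?case .
qed



locale wseq =
  fixes A :: "nat \<Rightarrow> real"
  assumes W: "weight_seq A" and M4: "cond_M4 A"
begin

definition c :: "nat \<Rightarrow> real" where "c p = A p / fact p"

lemma Apos: "A p > 0" using W unfolding weight_seq_def by auto
lemma A0: "A 0 = 1" using W unfolding weight_seq_def by auto
lemma A1: "A 1 = 1" using W unfolding weight_seq_def by auto
lemma cpos: "c p > 0" unfolding c_def using Apos by simp
lemma c0: "c 0 = 1" unfolding c_def using A0 by simp
lemma c1: "c 1 = 1" unfolding c_def using A1 by simp
lemma c1': "c (Suc 0) = 1" using c1 by simp

lemma c_lc: "c (Suc p) ^ 2 \<le> c p * c (Suc (Suc p))"
  using M4 unfolding cond_M4_def c_def
  by (metis Suc_eq_plus1 add_diff_cancel_right' le_add2)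

lemma ratio_mono: "c (Suc p) / c p \<le> c (Suc (Suc p)) / c (Suc p)"
proof -
  have "c (Suc p) * c (Suc p) \<le> c p * c (Suc (Suc p))" using c_lc by (simp add: power2_eq_square)
  then show ?thesis using cpos[of p] cpos[of "Suc p"]
    by (simp add: divide_simps) (simp add: mult.commute)
qed

lemma ratio_le: "j \<le> k \<Longrightarrow> c (Suc j) / c j \<le> c (Suc k) / c k"
  using incseq_SucI[of "\<lambda>p. c (Suc p) / c p", OF ratio_mono] unfolding incseq_def by blast

lemma swap: "j \<le> k \<Longrightarrow> c (Suc j) * c k \<le> c j * c (Suc k)"
  using ratio_le[of j k] cpos[of j] cpos[of k] by (simp add: divide_simps mult.commute)

lemma L0: "j \<le> k \<Longrightarrow> c j * c k \<le> c (j + k)"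
proof (induction j arbitrary: k)
  case 0 then show ?case by (simp add: c0)
next
  case (Suc j)
  have "c (Suc j) * c k \<le> c j * c (Suc k)" using swap Suc by simp
  also have "\<dots> \<le> c (j + Suc k)" using Suc.IH[of "Suc k"] Suc.prems by simp
  finally show ?case by simp
qed

lemma L0': "c j * c k \<le> c (j + k)"
  using L0[of j k] L0[of k j] by (cases "j \<le> k") (auto simp: mult.commute add.commute)

lemma L1: "Suc i \<le> k \<Longrightarrow> c (Suc i) * c k \<le> c (i + k)"
proof (induction i arbitrary: k)
  case 0 then show ?case by (simp add: c1')
next
  case (Suc i)
  have "c (Suc (Suc i)) * c k \<le> c (Suc i) * c (Suc k)" using swap Suc by simp
  also have "\<dots> \<le> c (i + Suc k)" using Suc.IH[of "Suc k"] Suc.prems by simp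
  finally show ?case by simp
qed

lemma L1': "1 \<le> j \<Longrightarrow> 1 \<le> k \<Longrightarrow> c j * c k \<le> c (j + k - 1)"
proof -
  assume j: "1 \<le> j" and k: "1 \<le> k"
  show ?thesis
  proof (cases "j \<le> k")
    case True
    obtain i where "j = Suc i" using j by (cases j) auto
    then show ?thesis using L1[of i k] True by simp
  next
    case False
    obtain i where "k = Suc i" using k by (cases k) auto
    then show ?thesis using L1[of i j] False by (simp add: mult.commute add.commute)
  qed
qed

lemma A_split: "j \<le> n \<Longrightarrow> real (n choose j) * A j * A (n - j) = c j * c (n - j) / c n * A n"
proof -
  assume "j \<le> n"
  then have f: "fact j * fact (n - j) * real (n choose j) = fact n"
    by (metis binomial_fact_lemma of_nat_fact of_nat_mult)
  have "A j = c j * fact j" "A (n - j) = c (n - j) * fact (n - j)" "A n = c n * fact n"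
    unfolding c_def by auto
  then show ?thesis using f cpos[of n] by (simp add: field_simps)
qed

lemma AA: "A j * A k \<le> A (j + k)"
proof -
  have "real ((j+k) choose j) * A j * A k = c j * c k / c (j+k) * A (j+k)"
    using A_split[of j "j+k"] by simp
  also have "\<dots> \<le> A (j + k)" using L0'[of j k] cpos[of "j+k"] Apos[of "j+k"]
    by (simp add: divide_simps)
  finally have *: "real ((j+k) choose j) * (A j * A k) \<le> A (j+k)" by (simp add: mult.assoc)
  have "1 \<le> real ((j+k) choose j)" by (simp add: Suc_leI)
  then have "1 * (A j * A k) \<le> real ((j+k) choose j) * (A j * A k)"
    using Apos[of j] Apos[of k] by (intro mult_right_mono) auto
  then show ?thesis using * by linarith
qed

lemma bnd_mid: "1 \<le> j \<Longrightarrow> j < n \<Longrightarrow> real (n choose j) * A j * A (n - j) \<le> c (n - 1) / c n * A n"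
proof -
  assume "1 \<le> j" "j < n"
  then have "c j * c (n - j) \<le> c (n - 1)" using L1'[of j "n - j"] by simp
  then show ?thesis using A_split[of j n] \<open>j < n\<close> cpos[of n] Apos[of n]
    by (simp add: divide_simps)
qed

lemma bnd_all: "j \<le> n \<Longrightarrow> real (n choose j) * A j * A (n - j) \<le> A n"
proof -
  assume j: "j \<le> n"
  have "c j * c (n - j) / c n \<le> 1" using L0'[of j "n-j"] j cpos[of n] by simp
  then have "c j * c (n - j) / c n * A n \<le> 1 * A n" using Apos[of n] by (intro mult_right_mono) auto
  then show ?thesis using A_split[OF j] by simp
qed

lemma ratio_tends:
  assumes M3': "cond_M3' A" and e: "e > 0"
  shows "\<exists>N. \<forall>n\<ge>N. c (n - 1) / c n \<le> e"
proof (rule ccontr)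
  assume "\<not> ?thesis"
  then have H: "\<forall>N. \<exists>n\<ge>N. c (n - 1) / c n > e" by (auto simp: not_le)
  have all: "c k / c (Suc k) > e" for k
  proof -
    obtain n where n: "n \<ge> Suc k" "c (n - 1) / c n > e" using H by blast
    obtain m where m: "n = Suc m" using n by (cases n) auto
    have "c (Suc k) / c k \<le> c (Suc m) / c m" using ratio_le[of k m] n m by simp
    then have "c m / c (Suc m) \<le> c k / c (Suc k)"
      using cpos[of k] cpos[of m] cpos[of "Suc k"] cpos[of "Suc m"]
      by (simp add: divide_simps mult.commute)
    then show ?thesis using n m by simp
  qed
  have "summable (\<lambda>k. A k / A (k + 1))" using M3' unfolding cond_M3'_def .
  moreover have "A k / A (k+1) = (c k / c (Suc k)) / real (Suc k)" for k
  proof -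
    have "c k / c (Suc k) = A k * real (Suc k) / A (Suc k)"
      unfolding c_def using Apos[of k] Apos[of "Suc k"] by (simp add: fact_Suc divide_simps)
    then show ?thesis by simp
  qed
  ultimately have s: "summable (\<lambda>k. (c k / c (Suc k)) / real (Suc k))" by simp
  have le: "norm (e * inverse (real (Suc k))) \<le> (c k / c (Suc k)) / real (Suc k)" for k
  proof -
    have "e / real (Suc k) \<le> (c k / c (Suc k)) / real (Suc k)"
      using all[of k] by (intro divide_right_mono) auto
    then show ?thesis using e by (simp add: divide_inverse)
  qed
  have "summable (\<lambda>k. e * inverse (real (Suc k)))"
    by (rule summable_comparison_test'[OF s, of 0]) (use le in auto)
  then have "summable (\<lambda>k. inverse (real (Suc k)))" using e by simp
  then have "summable (\<lambda>k. inverse (real k))" using summable_Suc_iff[of "\<lambda>k. inverse (real k)"] by simp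
  then show False using not_summable_harmonic[where 'a=real] by simp
qed

definition b :: "nat \<Rightarrow> nat \<Rightarrow> real" where
  "b n j = real (n choose j) * A j * A (n - j) / A n"

lemma b_le1: "j \<le> n \<Longrightarrow> b n j \<le> 1"
  using bnd_all[of j n] Apos[of n] unfolding b_def by (simp add: divide_simps)
lemma b_nonneg: "b n j \<ge> 0"
  using Apos[of n] Apos[of j] Apos[of "n - j"] unfolding b_def by simp
lemma b_nn: "b n n = 1" using Apos[of n] A0 unfolding b_def by simp
lemma b_mid: "1 \<le> j \<Longrightarrow> j < n \<Longrightarrow> b n j \<le> c (n - 1) / c n"
  using bnd_mid[of j n] Apos[of n] unfolding b_def by (simp add: divide_simps)

end

lemma geo1:
  fixes C h :: real assumes "C \<ge> 0" "h \<ge> 0"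
  shows "(\<Sum>j<n. C * h ^ Suc j * (h * (1 + C)) ^ (n - Suc j)) \<le> (h * (1 + C)) ^ n - h ^ n"
proof (induction n)
  case 0 then show ?case by simp
next
  case (Suc n)
  let ?G = "h * (1 + C)"
  have "(\<Sum>j<Suc n. C * h ^ Suc j * ?G ^ (Suc n - Suc j)) =
        (\<Sum>j<n. C * h ^ Suc j * ?G ^ (Suc n - Suc j)) + C * h ^ Suc n" by simp
  also have "(\<Sum>j<n. C * h ^ Suc j * ?G ^ (Suc n - Suc j)) = ?G * (\<Sum>j<n. C * h ^ Suc j * ?G ^ (n - Suc j))"
    unfolding sum_distrib_left
  proof (rule sum.cong)
    fix j assume "j \<in> {..<n}"
    then have "Suc n - Suc j = Suc (n - Suc j)" by auto
    then show "C * h ^ Suc j * ?G ^ (Suc n - Suc j) = ?G * (C * h ^ Suc j * ?G ^ (n - Suc j))"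
      by (simp only: power_Suc) (simp add: algebra_simps)
  qed simp
  also have "?G * (\<Sum>j<n. C * h ^ Suc j * ?G ^ (n - Suc j)) \<le> ?G * (?G ^ n - h ^ n)"
    using Suc assms by (intro mult_left_mono) auto
  finally show ?case by (simp add: algebra_simps)
qed

lemma geo2: "(\<Sum>j<m. (1/2::real) ^ Suc j) = 1 - (1/2) ^ m"
  by (induction m) (auto simp: algebra_simps)

context wseq begin

lemma numeric:
  assumes M3': "cond_M3' A" and C1: "C1 > 0" and h1: "h1 > 0"
    and mono: "\<And>n K K'. P n K \<Longrightarrow> K \<le> K' \<Longrightarrow> P n K'"
    and P0: "P 0 1"
    and step: "\<And>n Kf. n \<ge> 1 \<Longrightarrow> (\<forall>m<n. P m (Kf m)) \<Longrightarrow>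
                  P n (\<Sum>j<n. b n (Suc j) * C1 * h1 ^ Suc j * Kf (n - Suc j))"
  shows "\<exists>K>0. \<forall>n. P n (K * (2 * h1) ^ n)"
proof -
  define G where "G = h1 * (1 + C1)"
  have i: "P n (G ^ n)" for n
  proof (induction n rule: less_induct)
    case (less n)
    show ?case
    proof (cases "n = 0")
      case True then show ?thesis using P0 by simp
    next
      case False
      then have "P n (\<Sum>j<n. b n (Suc j) * C1 * h1 ^ Suc j * G ^ (n - Suc j))"
        using step[of n "\<lambda>m. G ^ m"] less by auto
      moreover have "(\<Sum>j<n. b n (Suc j) * C1 * h1 ^ Suc j * G ^ (n - Suc j)) \<le> (\<Sum>j<n. C1 * h1 ^ Suc j * G ^ (n - Suc j))"
      proof (rule sum_mono)
        fix j assume "j \<in> {..<n}"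
        then have "b n (Suc j) \<le> 1" using b_le1 by auto
        moreover have "C1 * h1 ^ Suc j * G ^ (n - Suc j) \<ge> 0" using C1 h1 by (simp add: G_def)
        ultimately show "b n (Suc j) * C1 * h1 ^ Suc j * G ^ (n - Suc j) \<le> C1 * h1 ^ Suc j * G ^ (n - Suc j)"
          using mult_right_mono[of "b n (Suc j)" 1 "C1 * h1 ^ Suc j * G ^ (n - Suc j)"] by (simp add: mult.assoc)
      qed
      moreover have "(\<Sum>j<n. C1 * h1 ^ Suc j * G ^ (n - Suc j)) \<le> G ^ n"
        using geo1[of C1 h1 n] C1 h1 unfolding G_def by (smt (verit) zero_le_power)
      ultimately show ?thesis using mono by (meson order_trans)
    qed
  qed
  define e where "e = 1 / (2 * C1)"
  have e: "e > 0" using C1 by (simp add: e_def)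
  obtain N1 where N1: "\<And>n. n \<ge> N1 \<Longrightarrow> c (n - 1) / c n \<le> e" using ratio_tends[OF M3' e] by blast
  obtain N2 where N2: "2 * C1 < 2 ^ N2" using real_arch_pow[of 2 "2 * C1"] by auto
  define N where "N = max 1 (max N1 N2)"
  define h where "h = 2 * h1"
  define K where "K = max 1 (max (2 * C1) ((1 + C1) ^ N))"
  have K: "K > 0" "K \<ge> 1" "K \<ge> 2 * C1" "K \<ge> (1 + C1) ^ N" unfolding K_def by auto
  have h: "h > 0" using h1 by (simp add: h_def)
  have ii: "P n (K * h ^ n)" for n
  proof (induction n rule: less_induct)
    case (less n)
    show ?case
    proof (cases "n < N")
      case True
      have "G ^ n = h1 ^ n * (1 + C1) ^ n" by (simp add: G_def power_mult_distrib)
      also have "\<dots> \<le> h ^ n * (1 + C1) ^ N"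
      proof (rule mult_mono)
        show "h1 ^ n \<le> h ^ n" using h1 by (intro power_mono) (auto simp: h_def)
        show "(1 + C1) ^ n \<le> (1 + C1) ^ N" using True C1 by (intro power_increasing) auto
      qed (use h C1 in auto)
      also have "\<dots> \<le> K * h ^ n" using K h by (simp add: mult.commute mult_right_mono)
      finally show ?thesis using i mono by blast
    next
      case False
      have NN: "N \<ge> 1" "N \<ge> N1" "N \<ge> N2" unfolding N_def by auto
      then have nN: "n \<ge> N" "n \<ge> 1" "n \<ge> N1" "n \<ge> N2" using False by linarith+
      obtain m where m: "n = Suc m" using nN by (cases n) auto
      have P: "P n (\<Sum>j<n. b n (Suc j) * C1 * h1 ^ Suc j * (K * h ^ (n - Suc j)))"
        using step[of n "\<lambda>m. K * h ^ m"] less nN by auto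
      have hp: "h1 ^ Suc j * h ^ (n - Suc j) = h ^ n * (1/2) ^ Suc j" if "j < n" for j
      proof -
        have "n = Suc j + (n - Suc j)" using that by simp
        then have hn: "h ^ n = h ^ Suc j * h ^ (n - Suc j)" by (metis power_add)
        have a: "h1 ^ Suc j = h ^ Suc j * (1/2) ^ Suc j"
          unfolding power_mult_distrib[symmetric] by (simp add: h_def)
        show ?thesis unfolding a hn by (simp add: algebra_simps)
      qed
      have "(\<Sum>j<n. b n (Suc j) * C1 * h1 ^ Suc j * (K * h ^ (n - Suc j)))
          = (\<Sum>j<m. b n (Suc j) * C1 * h1 ^ Suc j * (K * h ^ (n - Suc j))) + C1 * h1 ^ n * K"
        using m b_nn by simp
      also have "(\<Sum>j<m. b n (Suc j) * C1 * h1 ^ Suc j * (K * h ^ (n - Suc j)))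
          \<le> (\<Sum>j<m. e * C1 * K * h ^ n * (1/2) ^ Suc j)"
      proof (rule sum_mono)
        fix j assume j: "j \<in> {..<m}"
        have "b n (Suc j) \<le> c (n - 1) / c n" using b_mid[of "Suc j" n] j m by auto
        also have "\<dots> \<le> e" using N1 nN by auto
        finally have be: "b n (Suc j) \<le> e" .
        have "b n (Suc j) * C1 * h1 ^ Suc j * (K * h ^ (n - Suc j)) = b n (Suc j) * (C1 * K * (h1 ^ Suc j * h ^ (n - Suc j)))"
          by (simp add: algebra_simps)
        also have "\<dots> = b n (Suc j) * (C1 * K * h ^ n * (1/2) ^ Suc j)" using hp[of j] j m by simp
        also have "\<dots> \<le> e * (C1 * K * h ^ n * (1/2) ^ Suc j)"
          using be C1 K h by (intro mult_right_mono) auto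
        finally show "b n (Suc j) * C1 * h1 ^ Suc j * (K * h ^ (n - Suc j)) \<le> e * C1 * K * h ^ n * (1/2) ^ Suc j"
          by (simp add: algebra_simps)
      qed
      also have "(\<Sum>j<m. e * C1 * K * h ^ n * (1/2) ^ Suc j) = e * C1 * K * h ^ n * (\<Sum>j<m. (1/2::real) ^ Suc j)"
        by (rule sum_distrib_left[symmetric])
      also have "\<dots> = e * C1 * K * h ^ n * (1 - (1/2) ^ m)" by (simp only: geo2)
      also have "\<dots> \<le> K * h ^ n / 2"
      proof -
        have ec: "e * C1 = 1/2" using C1 by (simp add: e_def)
        have "e * C1 * K * h ^ n * (1 - (1/2) ^ m) = (e * C1) * (K * h ^ n * (1 - (1/2) ^ m))"
          by (simp only: mult.assoc)
        also have "\<dots> = (K * h ^ n / 2) * (1 - (1/2) ^ m)" unfolding ec by simp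
        also have "\<dots> \<le> (K * h ^ n / 2) * 1"
          using K h by (intro mult_left_mono) auto
        finally show ?thesis by simp
      qed
      also have "C1 * h1 ^ n * K \<le> K * h ^ n / 2"
      proof -
        have "h1 ^ n = h ^ n * (1/2) ^ n" unfolding power_mult_distrib[symmetric] by (simp add: h_def)
        have "C1 * (1/2::real) ^ n \<le> 1/2"
        proof -
          have pw: "(2::real) ^ N2 \<le> 2 ^ n" using nN by (intro power_increasing) auto
          have c2: "2 * C1 \<le> 2 ^ n" using N2 pw by linarith
          have "C1 * (1/2::real) ^ n = C1 / 2 ^ n" by (simp add: power_one_over)
          also have "\<dots> \<le> 1/2" using c2 by (simp add: pos_divide_le_eq)
          finally show ?thesis .
        qed
        have "C1 * h1 ^ n * K = (C1 * (1/2) ^ n) * (K * h ^ n)" using \<open>h1 ^ n = h ^ n * (1/2) ^ n\<close>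
          by (simp add: algebra_simps)
        also have "\<dots> \<le> (1/2) * (K * h ^ n)"
          using \<open>C1 * (1/2::real) ^ n \<le> 1/2\<close> K h by (intro mult_right_mono) auto
        finally show ?thesis by simp
      qed
      finally have "(\<Sum>j<n. b n (Suc j) * C1 * h1 ^ Suc j * (K * h ^ (n - Suc j))) \<le> K * h ^ n"
        by simp
      then show ?thesis using P mono by blast
    qed
  qed
  then show ?thesis using K unfolding h_def by blast
qed

end


lemma ex_eq: "(\<lambda>i. (axis i 1, 0)) = (ex :: 'n::finite \<Rightarrow> _)" by (rule ext) (simp add: ex_def)
lemma exi_eq: "(\<lambda>i. (0, axis i 1)) = (exi :: 'n::finite \<Rightarrow> _)" by (rule ext) (simp add: exi_def)

lemma Dx_DL: "Dx \<beta> f = (\<lambda>z. (- \<i>) ^ mi_abs \<beta> * DL (lst ex \<beta>) f z)"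
  unfolding Dx_def[abs_def] pder_DL ex_eq ..

lemma Dxi_DL: "Dxi \<alpha> g z = (- \<i>) ^ mi_abs \<alpha> * DL (lst exi \<alpha>) g z"
  unfolding Dxi_def pder_DL exi_eq ..

lemma ci_nz: "((- \<i>) ^ k :: complex) \<noteq> 0" by simp
lemma ci_norm: "norm ((- \<i>) ^ k :: complex) = 1" by (simp add: norm_power)

lemma Dxi_Dx_DL:
  assumes U: "open U" and x: "x \<in> U"
    and H: "\<And>k y. 1 \<le> k \<Longrightarrow> k \<le> length (lst exi \<alpha>) \<Longrightarrow> y \<in> U \<Longrightarrow>
        DL (drop k (lst exi \<alpha>)) (DL (lst ex \<beta>) f) differentiable (at y) \<or>
        DL (drop k (lst exi \<alpha>)) (\<lambda>z. (- \<i>) ^ mi_abs \<beta> * DL (lst ex \<beta>) f z) differentiable (at y)"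
  shows "Dxi \<alpha> (Dx \<beta> f) x = (- \<i>) ^ (mi_abs \<alpha> + mi_abs \<beta>) * DL (lst exi \<alpha> @ lst ex \<beta>) f x"
proof -
  have s: "DL (lst exi \<alpha>) (\<lambda>z. (- \<i>) ^ mi_abs \<beta> * DL (lst ex \<beta>) f z) x =
           (- \<i>) ^ mi_abs \<beta> * DL (lst exi \<alpha>) (DL (lst ex \<beta>) f) x"
    by (rule DL_scale[OF U ci_nz H x])
  show ?thesis by (simp add: Dxi_DL Dx_DL DL_append power_add s)
qed

lemma smooth_a:
  fixes a :: "(real^'n::finite) \<times> (real^'n) \<Rightarrow> complex"
  assumes sm: "smooth2 a"
  shows "DL (lst exi \<alpha> @ lst ex \<beta>) a differentiable (at x)"
    and "Dxi \<alpha> (Dx \<beta> a) x = (- \<i>) ^ (mi_abs \<alpha> + mi_abs \<beta>) * DL (lst exi \<alpha> @ lst ex \<beta>) a x"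
proof -
  have d: "Dxi \<alpha>' (Dx \<beta> a) differentiable (at y)" for \<alpha>' y
  proof -
    have "Dxi \<alpha>' (Dx \<beta> a) differentiable_on UNIV" using sm unfolding smooth2_def by blast
    then show ?thesis unfolding differentiable_on_def by blast
  qed
  have H: "DL (drop k (lst exi \<alpha>)) (DL (lst ex \<beta>) a) differentiable (at y) \<or>
        DL (drop k (lst exi \<alpha>)) (\<lambda>z. (- \<i>) ^ mi_abs \<beta> * DL (lst ex \<beta>) a z) differentiable (at y)" for k y
  proof -
    obtain \<alpha>' where al: "drop k (lst exi \<alpha>) = lst exi \<alpha>'" using lst_props[of \<alpha> _ exi] by blast
    have "(\<lambda>z. inverse ((- \<i>) ^ mi_abs \<alpha>') * Dxi \<alpha>' (Dx \<beta> a) z) differentiable (at y)"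
      by (rule diff_scale[OF d])
    moreover have "(\<lambda>z. inverse ((- \<i>) ^ mi_abs \<alpha>') * Dxi \<alpha>' (Dx \<beta> a) z) =
        DL (lst exi \<alpha>') (\<lambda>z. (- \<i>) ^ mi_abs \<beta> * DL (lst ex \<beta>) a z)"
      by (rule ext) (simp add: Dxi_DL Dx_DL[symmetric])
    ultimately show ?thesis using al by simp
  qed
  show e: "Dxi \<alpha> (Dx \<beta> a) x = (- \<i>) ^ (mi_abs \<alpha> + mi_abs \<beta>) * DL (lst exi \<alpha> @ lst ex \<beta>) a x" for x
    by (rule Dxi_Dx_DL[OF open_UNIV UNIV_I H])
  have "(\<lambda>z. inverse ((- \<i>) ^ (mi_abs \<alpha> + mi_abs \<beta>)) * Dxi \<alpha> (Dx \<beta> a) z) differentiable (at x)"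
    by (rule diff_scale[OF d])
  moreover have "(\<lambda>z. inverse ((- \<i>) ^ (mi_abs \<alpha> + mi_abs \<beta>)) * Dxi \<alpha> (Dx \<beta> a) z) = DL (lst exi \<alpha> @ lst ex \<beta>) a"
    by (rule ext) (simp add: e)
  ultimately show "DL (lst exi \<alpha> @ lst ex \<beta>) a differentiable (at x)" by simp
qed

lemma comm_a:
  fixes a :: "(real^'n::finite) \<times> (real^'n) \<Rightarrow> complex"
  assumes sm: "smooth2 a" and L: "L \<in> lists EE"
  shows "DL L a = DL (canon (mset L)) a"
proof (rule comm[OF canon_mset _ L])
  fix M :: "((real^'n) \<times> (real^'n)) multiset" and x
  show "DL (canon M) a differentiable (at x)" unfolding canon_def by (rule smooth_a(1)[OF sm])
qed

lemma diff_a: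
  fixes a :: "(real^'n::finite) \<times> (real^'n) \<Rightarrow> complex"
  assumes sm: "smooth2 a" and L: "L \<in> lists EE"
  shows "DL L a differentiable (at x)"
  unfolding comm_a[OF sm L] canon_def by (rule smooth_a(1)[OF sm])

lemma bound_a:
  fixes a :: "(real^'n::finite) \<times> (real^'n) \<Rightarrow> complex"
  assumes sm: "smooth2 a" and L: "L \<in> lists EE" and W: "wseq A"
    and de: "deriv_est A \<rho> B h C a" and z: "z \<in> QBc B" and C: "C \<ge> 0" and h: "h \<ge> 0"
  shows "norm (DL L a z) \<le> C * h ^ length L * norm (a z) * A (length L) / jbr z powr (\<rho> * real (length L))"
proof -
  define \<alpha> where "\<alpha> = (\<lambda>i. count (mset L) (exi i))"
  define \<beta> where "\<beta> = (\<lambda>i. count (mset L) (ex i))"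
  have cM: "canon (mset L) = lst exi \<alpha> @ lst ex \<beta>" unfolding canon_def \<alpha>_def \<beta>_def ..
  have "set_mset (mset L) \<subseteq> EE" using L by auto
  then have "length (canon (mset L)) = length L" using canon_mset by (metis size_mset)
  moreover have "length (lst exi \<alpha>) = mi_abs \<alpha>" "length (lst ex \<beta>) = mi_abs \<beta>"
    using lst_props by blast+
  ultimately have len: "mi_abs \<alpha> + mi_abs \<beta> = length L" using cM by simp
  have "DL L a z = DL (lst exi \<alpha> @ lst ex \<beta>) a z" using comm_a[OF sm L] cM by simp
  then have "norm (DL L a z) = norm (Dxi \<alpha> (Dx \<beta> a) z)"
    using smooth_a(2)[OF sm, of \<alpha> \<beta> z] by (simp add: norm_mult ci_norm)
  also have "\<dots> \<le> C * h ^ (mi_abs \<alpha> + mi_abs \<beta>) * norm (a z) * A (mi_abs \<alpha>) * A (mi_abs \<beta>)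
        / jbr z powr (\<rho> * real (mi_abs \<alpha> + mi_abs \<beta>))"
    using de z unfolding deriv_est_def by blast
  also have "\<dots> \<le> C * h ^ length L * norm (a z) * A (length L) / jbr z powr (\<rho> * real (length L))"
  proof -
    have "A (mi_abs \<alpha>) * A (mi_abs \<beta>) \<le> A (length L)" using wseq.AA[OF W] len by metis
    then have "C * h ^ length L * norm (a z) * (A (mi_abs \<alpha>) * A (mi_abs \<beta>)) \<le>
               C * h ^ length L * norm (a z) * A (length L)"
      using C h by (intro mult_left_mono) auto
    then show ?thesis using len by (simp add: divide_right_mono mult.assoc)
  qed
  finally show ?thesis .
qed

lemma sel_allF: "length vs = n \<Longrightarrow> sel (replicate n False) vs = [] \<and> seln (replicate n False) vs = vs"
  by (induction vs arbitrary: n) auto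

lemma cnt_pos: "length bs = n \<Longrightarrow> bs \<noteq> replicate n False \<Longrightarrow> cnt bs \<ge> 1"
proof (induction bs arbitrary: n)
  case Nil then show ?case by simp
next
  case (Cons b bs)
  then obtain m where m: "n = Suc m" by auto
  show ?case
  proof (cases b)
    case True then show ?thesis by simp
  next
    case False then show ?thesis using Cons m by simp
  qed
qed

lemma p0_recur:
  fixes a :: "'v::real_normed_vector \<Rightarrow> complex"
  assumes DA: "\<And>L x. L \<in> lists E \<Longrightarrow> DL L a differentiable (at x)"
    and U: "open U" and aU: "\<And>x. x \<in> U \<Longrightarrow> a x \<noteq> 0"
    and dp: "\<And>ws y. ws \<in> lists E \<Longrightarrow> length ws < length vs \<Longrightarrow> y \<in> U \<Longrightarrow>
               DL ws (\<lambda>x. inverse (a x)) differentiable (at y)"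
    and vs: "vs \<in> lists E" "vs \<noteq> []" and x: "x \<in> U"
  shows "DL vs (\<lambda>x. inverse (a x)) x = - inverse (a x) *
     (\<Sum>bs\<in>masks (length vs) - {replicate (length vs) False}.
        DL (sel bs vs) a x * DL (seln bs vs) (\<lambda>x. inverse (a x)) x)"
proof -
  let ?p = "\<lambda>x. inverse (a x)"
  let ?F = "\<lambda>bs. DL (sel bs vs) a x * DL (seln bs vs) ?p x"
  let ?z = "replicate (length vs) False"
  have "DL vs (\<lambda>x. a x * ?p x) x = (\<Sum>bs\<in>masks (length vs). ?F bs)"
    by (rule leibniz[OF U _ dp vs(1) x]) (use DA in auto)
  moreover have "DL vs (\<lambda>x. a x * ?p x) x = DL vs (\<lambda>_. 1) x"
    by (rule DL_local[OF U _ x]) (use aU in simp)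
  moreover have "DL vs (\<lambda>_. 1) x = 0" using DL_const[OF vs(2)] by simp
  moreover have "(\<Sum>bs\<in>masks (length vs). ?F bs) = ?F ?z + (\<Sum>bs\<in>masks (length vs) - {?z}. ?F bs)"
    by (rule sum.remove[OF finite_masks]) (simp add: masks_def)
  moreover have "?F ?z = a x * DL vs ?p x" using sel_allF[of vs "length vs"] by simp
  ultimately have "a x * DL vs ?p x = - (\<Sum>bs\<in>masks (length vs) - {?z}. ?F bs)"
    by (simp add: eq_neg_iff_add_eq_0)
  then show ?thesis using aU[OF x] by (simp add: field_simps)
qed

lemma p0_diff:
  fixes a :: "'v::real_normed_vector \<Rightarrow> complex"
  assumes DA: "\<And>L x. L \<in> lists E \<Longrightarrow> DL L a differentiable (at x)"
    and U: "open U" and aU: "\<And>x. x \<in> U \<Longrightarrow> a x \<noteq> 0"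
  shows "ws \<in> lists E \<Longrightarrow> y \<in> U \<Longrightarrow> DL ws (\<lambda>x. inverse (a x)) differentiable (at y)"
proof (induction "length ws" arbitrary: ws y rule: less_induct)
  case less
  let ?p = "\<lambda>x. inverse (a x)"
  show ?case
  proof (cases "ws = []")
    case True
    have "a differentiable (at y)" using DA[of "[]" y] by simp
    then show ?thesis using True aU[OF less.prems(2)] by simp
  next
    case False
    let ?R = "\<lambda>x. - inverse (a x) * (\<Sum>bs\<in>masks (length ws) - {replicate (length ws) False}.
        DL (sel bs ws) a x * DL (seln bs ws) ?p x)"
    have dp': "DL ws' ?p differentiable (at y')"
      if "ws' \<in> lists E" "length ws' < length ws" "y' \<in> U" for ws' y'
      using less.hyps that by blast
    have eq: "?R x = DL ws ?p x" if "x \<in> U" for x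
      using p0_recur[OF DA U aU dp' less.prems(1) False that] by simp
    have "?R differentiable (at y)"
    proof -
      have da: "a differentiable (at y)" using DA[of "[]" y] by simp
      have ay: "a y \<noteq> 0" using aU less.prems by blast
      have trm: "(\<lambda>x. DL (sel bs ws) a x * DL (seln bs ws) ?p x) differentiable (at y)"
        if bs: "bs \<in> masks (length ws) - {replicate (length ws) False}" for bs
      proof -
        have l: "length bs = length ws" using bs by (simp add: masks_def)
        have c: "cnt bs \<ge> 1" using cnt_pos[OF l] bs by simp
        have "length (seln bs ws) < length ws" using sel_len[OF l] c False by simp
        moreover have "seln bs ws \<in> lists E" "sel bs ws \<in> lists E" using sel_set[of bs ws] less.prems by auto
        ultimately show ?thesis using less DA by (intro differentiable_mult) auto
      qed
      have "(\<lambda>x. \<Sum>bs\<in>masks (length ws) - {replicate (length ws) False}.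
          DL (sel bs ws) a x * DL (seln bs ws) ?p x) differentiable (at y)"
        by (rule differentiable_sum) (use finite_masks trm in auto)
      moreover have "(\<lambda>x. - inverse (a x)) differentiable (at y)"
        by (intro differentiable_minus differentiable_inverse da ay)
      ultimately show ?thesis by (rule differentiable_mult[rotated])
    qed
    from diff_open_eq[OF U less.prems(2) eq this] show ?thesis .
  qed
qed

definition Pz :: "'v::real_normed_vector set \<Rightarrow> ('v \<Rightarrow> complex) \<Rightarrow> (nat \<Rightarrow> real) \<Rightarrow> real \<Rightarrow> real \<Rightarrow> 'v \<Rightarrow> nat \<Rightarrow> real \<Rightarrow> bool" where
  "Pz E p A \<rho> w z n K \<longleftrightarrow> (\<forall>L\<in>lists E. length L = n \<longrightarrow>
      norm (DL L p z) \<le> K * norm (p z) * A n / w powr (\<rho> * real n))"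

lemma term_id:
  fixes na np w \<rho> C1 h1 Kf :: real
  assumes "na * np = 1" "w > 0" "k \<le> n" "An > 0"
  shows "np * (real (n choose k) * ((C1 * h1 ^ k * na * Ak / w powr (\<rho> * real k)) *
           (Kf * np * Ank / w powr (\<rho> * real (n - k)))))
       = real (n choose k) * Ak * Ank / An * C1 * h1 ^ k * Kf * np * An / w powr (\<rho> * real n)"
proof -
  have "w powr (\<rho> * real k) * w powr (\<rho> * real (n - k)) = w powr (\<rho> * real n)"
    using assms(3) by (simp add: powr_add[symmetric] of_nat_diff algebra_simps)
  moreover have "w powr (\<rho> * real k) > 0" "w powr (\<rho> * real (n - k)) > 0" using assms(2) by auto
  ultimately show ?thesis using assms(1,4)
    by (simp add: field_simps)
qed

lemma p0_step:
  fixes a :: "'v::real_normed_vector \<Rightarrow> complex"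
  assumes DA: "\<And>L x. L \<in> lists E \<Longrightarrow> DL L a differentiable (at x)"
    and U: "open U" and aU: "\<And>x. x \<in> U \<Longrightarrow> a x \<noteq> 0" and z: "z \<in> U" and W: "wseq A"
    and ba: "\<And>L. L \<in> lists E \<Longrightarrow> norm (DL L a z) \<le> C1 * h1 ^ length L * norm (a z) * A (length L) / w powr (\<rho> * real (length L))"
    and w: "w > 0" and n: "n \<ge> 1"
    and IH: "\<And>m. m < n \<Longrightarrow> Pz E (\<lambda>x. inverse (a x)) A \<rho> w z m (Kf m)"
  shows "Pz E (\<lambda>x. inverse (a x)) A \<rho> w z n (\<Sum>j<n. wseq.b A n (Suc j) * C1 * h1 ^ Suc j * Kf (n - Suc j))"
  unfolding Pz_def
proof (intro ballI impI)
  fix L assume L: "L \<in> lists E" and len: "length L = n"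
  let ?p = "\<lambda>x. inverse (a x)"
  let ?R = "masks n - {replicate n False}"
  let ?F = "\<lambda>bs. DL (sel bs L) a z * DL (seln bs L) ?p z"
  let ?T = "\<lambda>j. (C1 * h1 ^ j * norm (a z) * A j / w powr (\<rho> * real j)) *
                 (Kf (n - j) * norm (?p z) * A (n - j) / w powr (\<rho> * real (n - j)))"
  let ?T' = "\<lambda>j. if j = 0 then 0 else ?T j"
  have Lne: "L \<noteq> []" using len n by auto
  have dp: "DL ws ?p differentiable (at y)" if "ws \<in> lists E" "y \<in> U" for ws y
    using p0_diff[OF DA U aU that] .
  have rec: "DL L ?p z = - ?p z * (\<Sum>bs\<in>?R. ?F bs)"
    using p0_recur[OF DA U aU dp L Lne z] len by simp
  have Fb: "norm (?F bs) \<le> ?T' (cnt bs)" if bs: "bs \<in> ?R" for bs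
  proof -
    have l: "length bs = length L" using bs len by (simp add: masks_def)
    have c: "cnt bs \<ge> 1" using cnt_pos[OF l] bs len by simp
    have sl: "length (sel bs L) = cnt bs" "length (seln bs L) = n - cnt bs" using sel_len[OF l] len by auto
    have sE: "sel bs L \<in> lists E" "seln bs L \<in> lists E" using sel_set[of bs L] L by auto
    have b1: "norm (DL (sel bs L) a z) \<le> C1 * h1 ^ cnt bs * norm (a z) * A (cnt bs) / w powr (\<rho> * real (cnt bs))"
      using ba[OF sE(1)] sl by simp
    have b2: "norm (DL (seln bs L) ?p z) \<le> Kf (n - cnt bs) * norm (?p z) * A (n - cnt bs) / w powr (\<rho> * real (n - cnt bs))"
      using IH[of "n - cnt bs"] c n sE(2) sl unfolding Pz_def by auto
    have "norm (?F bs) \<le> ?T (cnt bs)" unfolding norm_mult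
      by (rule mult_mono[OF b1 b2]) (use b1 in \<open>auto intro: order_trans[OF norm_ge_zero]\<close>)
    then show ?thesis using c by simp
  qed
  have "norm (DL L ?p z) = norm (?p z) * norm (\<Sum>bs\<in>?R. ?F bs)" unfolding rec by (simp add: norm_mult)
  also have "\<dots> \<le> norm (?p z) * (\<Sum>bs\<in>?R. ?T' (cnt bs))"
    by (intro mult_left_mono order_trans[OF norm_sum] sum_mono Fb) auto
  also have "(\<Sum>bs\<in>?R. ?T' (cnt bs)) = (\<Sum>bs\<in>masks n. ?T' (cnt bs))"
  proof -
    have "replicate n False \<in> masks n" by (simp add: masks_def)
    moreover have "cnt (replicate n False) = 0" by (simp add: cnt_def)
    ultimately show ?thesis
      using sum.remove[OF finite_masks, of "replicate n False" n "\<lambda>bs. ?T' (cnt bs)"] by simp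
  qed
  also have "\<dots> = (\<Sum>j\<le>n. real (n choose j) * ?T' j)" by (rule sum_masks_cnt)
  also have "\<dots> = (\<Sum>j<n. real (n choose Suc j) * ?T (Suc j))"
  proof -
    obtain m where m: "n = Suc m" using n by (cases n) auto
    show ?thesis unfolding m by (subst sum.atMost_Suc_shift) (simp add: lessThan_Suc_atMost)
  qed
  also have "norm (?p z) * (\<Sum>j<n. real (n choose Suc j) * ?T (Suc j)) =
      (\<Sum>j<n. wseq.b A n (Suc j) * C1 * h1 ^ Suc j * Kf (n - Suc j) * norm (?p z) * A n / w powr (\<rho> * real n))"
    unfolding sum_distrib_left
  proof (rule sum.cong[OF refl])
    fix j assume j: "j \<in> {..<n}"
    have na: "norm (a z) * norm (?p z) = 1" using aU[OF z] by (simp add: norm_inverse)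
    show "norm (?p z) * (real (n choose Suc j) * ?T (Suc j)) =
      wseq.b A n (Suc j) * C1 * h1 ^ Suc j * Kf (n - Suc j) * norm (?p z) * A n / w powr (\<rho> * real n)"
      unfolding wseq.b_def[OF W]
      by (rule term_id[OF na w]) (use j wseq.Apos[OF W] in auto)
  qed
  also have "\<dots> = (\<Sum>j<n. wseq.b A n (Suc j) * C1 * h1 ^ Suc j * Kf (n - Suc j)) * norm (?p z) * A n / w powr (\<rho> * real n)"
    by (simp add: sum_distrib_right sum_divide_distrib)
  finally show "norm (DL L ?p z) \<le> (\<Sum>j<n. wseq.b A n (Suc j) * C1 * h1 ^ Suc j * Kf (n - Suc j)) *
      norm (?p z) * A n / w powr (\<rho> * real n)" .
qed

lemma jbr_pos: "jbr z > 0"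
  unfolding jbr_def by (simp add: add_pos_nonneg)

lemma QBc_mono: "B2 \<le> B \<Longrightarrow> QBc B \<subseteq> QBc B2"
  unfolding QBc_def by auto

lemma lst_EE: "lst exi \<alpha> @ lst ex \<beta> \<in> lists EE"
  using lst_props[of \<alpha> _ exi] lst_props[of \<beta> _ ex] unfolding EE_def by auto

lemma core:
  fixes a :: "(real^'n::finite) \<times> (real^'n) \<Rightarrow> complex"
  assumes sm: "smooth2 a" and W: "wseq A" and M3': "cond_M3' A"
    and de: "deriv_est A \<rho> B2 h1 C1 a" and h1: "h1 > 0" and C1: "C1 > 0"
    and nz: "\<And>z. z \<in> QBc B \<Longrightarrow> a z \<noteq> 0" and BB: "B2 \<le> B"
  shows "\<exists>K>0. \<forall>\<alpha> \<beta> z. z \<in> QBc B \<longrightarrow> norm (Dxi \<alpha> (Dx \<beta> (\<lambda>z. inverse (a z))) z) \<le>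
     K * (2 * h1) ^ (mi_abs \<alpha> + mi_abs \<beta>) * norm (inverse (a z)) * A (mi_abs (\<lambda>i. \<alpha> i + \<beta> i))
       / jbr z powr (\<rho> * real (mi_abs \<alpha> + mi_abs \<beta>))"
proof -
  let ?p = "\<lambda>z. inverse (a z)"
  define U where "U = {x. a x \<noteq> 0}"
  have DA: "\<And>L x. L \<in> lists EE \<Longrightarrow> DL L a differentiable (at x)" using diff_a[OF sm] by blast
  have "continuous_on UNIV a"
    using DA[of "[]"] by (simp add: differentiable_at_imp_differentiable_on differentiable_imp_continuous_on)
  then have U: "open U" unfolding U_def by (rule open_Collect_neq) simp
  have aU: "\<And>x. x \<in> U \<Longrightarrow> a x \<noteq> 0" by (simp add: U_def)
  have QU: "QBc B \<subseteq> U" using nz by (auto simp: U_def)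
  have Q2: "QBc B \<subseteq> QBc B2" by (rule QBc_mono[OF BB])
  define P where "P n K = (\<forall>z\<in>QBc B. Pz EE ?p A \<rho> (jbr z) z n K)" for n K
  have "\<exists>K>0. \<forall>n. P n (K * (2 * h1) ^ n)"
  proof (rule wseq.numeric[OF W M3' C1 h1])
    fix n K K' assume PK: "P n K" and KK: "K \<le> K'"
    show "P n K'" unfolding P_def Pz_def
    proof (intro ballI impI)
      fix z :: "(real^'n) \<times> (real^'n)" and L :: "((real^'n) \<times> (real^'n)) list"
      assume z: "z \<in> QBc B" and L: "L \<in> lists EE" "length L = n"
      have "norm (DL L ?p z) \<le> K * norm (?p z) * A n / jbr z powr (\<rho> * real n)"
        using PK z L unfolding P_def Pz_def by blast
      also have "\<dots> = K * (norm (?p z) * A n / jbr z powr (\<rho> * real n))" by simp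
      also have "\<dots> \<le> K' * (norm (?p z) * A n / jbr z powr (\<rho> * real n))"
        using KK wseq.Apos[OF W, of n] by (intro mult_right_mono) auto
      finally show "norm (DL L ?p z) \<le> K' * norm (?p z) * A n / jbr z powr (\<rho> * real n)" by simp
    qed
  next
    have jnz: "jbr z \<noteq> 0" for z :: "(real^'n) \<times> (real^'n)" using jbr_pos[of z] by simp
    show "P 0 1" unfolding P_def Pz_def using wseq.A0[OF W] jnz by auto
  next
    fix n Kf assume n: "n \<ge> 1" and IH: "\<forall>m<n. P m (Kf m)"
    show "P n (\<Sum>j<n. wseq.b A n (Suc j) * C1 * h1 ^ Suc j * Kf (n - Suc j))"
      unfolding P_def
    proof
      fix z :: "(real^'n) \<times> (real^'n)" assume z: "z \<in> QBc B"
      show "Pz EE ?p A \<rho> (jbr z) z n (\<Sum>j<n. wseq.b A n (Suc j) * C1 * h1 ^ Suc j * Kf (n - Suc j))"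
      proof (rule p0_step[OF DA U aU _ W _ jbr_pos n])
        show "z \<in> U" using QU z by auto
        show "norm (DL L a z) \<le> C1 * h1 ^ length L * norm (a z) * A (length L) / jbr z powr (\<rho> * real (length L))"
          if "L \<in> lists EE" for L
          by (rule bound_a[OF sm that W de]) (use z Q2 C1 h1 in auto)
        show "Pz EE ?p A \<rho> (jbr z) z m (Kf m)" if "m < n" for m
          using IH that z unfolding P_def by blast
      qed
    qed
  qed
  then obtain K where K: "K > 0" "\<And>n. P n (K * (2 * h1) ^ n)" by blast
  have "norm (Dxi \<alpha> (Dx \<beta> ?p) z) \<le> K * (2 * h1) ^ (mi_abs \<alpha> + mi_abs \<beta>) * norm (?p z)
       * A (mi_abs (\<lambda>i. \<alpha> i + \<beta> i)) / jbr z powr (\<rho> * real (mi_abs \<alpha> + mi_abs \<beta>))"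
    if z: "z \<in> QBc B" for \<alpha> \<beta> z
  proof -
    have zU: "z \<in> U" using QU z by auto
    have H: "DL (drop k (lst exi \<alpha>)) (DL (lst ex \<beta>) ?p) differentiable (at y) \<or>
        DL (drop k (lst exi \<alpha>)) (\<lambda>z. (- \<i>) ^ mi_abs \<beta> * DL (lst ex \<beta>) ?p z) differentiable (at y)"
      if "y \<in> U" for k y
    proof -
      have "drop k (lst exi \<alpha>) @ lst ex \<beta> \<in> lists EE"
        using lst_EE[of \<alpha> \<beta>] set_drop_subset[of k "lst exi \<alpha>"] by auto
      from p0_diff[OF DA U aU this that] show ?thesis by (simp add: DL_append)
    qed
    have e: "Dxi \<alpha> (Dx \<beta> ?p) z = (- \<i>) ^ (mi_abs \<alpha> + mi_abs \<beta>) * DL (lst exi \<alpha> @ lst ex \<beta>) ?p z"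
      by (rule Dxi_Dx_DL[OF U zU H])
    have len: "length (lst exi \<alpha> @ lst ex \<beta>) = mi_abs \<alpha> + mi_abs \<beta>"
      using lst_props[of \<alpha> _ exi] lst_props[of \<beta> _ ex] by auto
    have "norm (Dxi \<alpha> (Dx \<beta> ?p) z) = norm (DL (lst exi \<alpha> @ lst ex \<beta>) ?p z)"
      unfolding e by (simp add: norm_mult ci_norm)
    also have "\<dots> \<le> K * (2 * h1) ^ (mi_abs \<alpha> + mi_abs \<beta>) * norm (?p z) * A (mi_abs \<alpha> + mi_abs \<beta>)
         / jbr z powr (\<rho> * real (mi_abs \<alpha> + mi_abs \<beta>))"
      using K(2)[of "mi_abs \<alpha> + mi_abs \<beta>"] z lst_EE[of \<alpha> \<beta>] len unfolding P_def Pz_def by blast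
    finally show ?thesis by (simp add: mi_abs_add)
  qed
  then show ?thesis using K(1) by blast
qed

theorem lemma3:
  fixes M A :: "nat \<Rightarrow> real" and \<rho> :: real and k :: ultra_kind
    and a :: "(real^'n::finite) \<times> (real^'n) \<Rightarrow> complex"
  assumes M: "weight_seq M" "cond_M1 M" "cond_M2 M" "cond_M3 M"
    and A: "weight_seq A" "cond_M1 A" "cond_M2 A" "cond_M3' A" "cond_M4 A"
    and AM: "\<exists>c0 L. c0 > 0 \<and> L > 0 \<and> (\<forall>p. A p \<le> c0 * L ^ p * M p)"
    and rho: "admissible_rho M A \<rho>"
    and sym: "Gamma_sym k M A \<rho> a"
    and hyp: "hypoelliptic k M A \<rho> a"
  shows "\<exists>B>0. (\<forall>z\<in>QBc B. a z \<noteq> 0) \<and>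
    (let p0 = (\<lambda>z. inverse (a z));
         est = (\<lambda>h C. \<forall>\<alpha> \<beta> z. z \<in> QBc B \<longrightarrow>
                 norm (Dxi \<alpha> (Dx \<beta> p0) z) \<le>
                   C * h ^ (mi_abs \<alpha> + mi_abs \<beta>) * norm (p0 z) * A (mi_abs (\<lambda>i. \<alpha> i + \<beta> i))
                   / jbr z powr (\<rho> * real (mi_abs \<alpha> + mi_abs \<beta>)))
     in case k of
          Beurling \<Rightarrow> (\<forall>h>0. \<exists>C>0. est h C)
        | Roumieu \<Rightarrow> (\<exists>h>0. \<exists>C>0. est h C))"
proof -
  have sm: "smooth2 a" using sym unfolding Gamma_sym_def by blast
  have W: "wseq A" using A(1,5) by (simp add: wseq_def)
  obtain B1 where B1: "B1 > 0" "hypo_lower k M B1 a" using hyp unfolding hypoelliptic_def by blast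
  obtain B2 where B2: "B2 > 0" "hypo_upper k A \<rho> B2 a" using hyp unfolding hypoelliptic_def by blast
  define B where "B = max B1 B2"
  have BB: "B2 \<le> B" "B1 \<le> B" "B > 0" using B1 B2 by (auto simp: B_def)
  have nz: "a z \<noteq> 0" if z: "z \<in> QBc B" for z
  proof -
    obtain x \<xi> where zx: "z = (x, \<xi>)" by (cases z)
    have z1: "(x, \<xi>) \<in> QBc B1" using QBc_mono[OF BB(2)] z zx by auto
    obtain c m where cm: "c > 0" "norm (a (x, \<xi>)) \<ge> c * exp (- assoc_fun M (m * norm x) - assoc_fun M (m * norm \<xi>))"
    proof (cases k)
      case Beurling
      have "\<exists>c>0. \<exists>m>0. \<forall>x \<xi>. (x, \<xi>) \<in> QBc B1 \<longrightarrow>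
          norm (a (x, \<xi>)) \<ge> c * exp (- assoc_fun M (m * norm x) - assoc_fun M (m * norm \<xi>))"
        using B1(2) Beurling by (simp add: hypo_lower_def Let_def)
      then obtain c m where "c > 0" "\<forall>x \<xi>. (x, \<xi>) \<in> QBc B1 \<longrightarrow>
          norm (a (x, \<xi>)) \<ge> c * exp (- assoc_fun M (m * norm x) - assoc_fun M (m * norm \<xi>))"
        by blast
      then show ?thesis using z1 that by blast
    next
      case Roumieu
      have "\<forall>m>0. \<exists>c>0. \<forall>x \<xi>. (x, \<xi>) \<in> QBc B1 \<longrightarrow>
          norm (a (x, \<xi>)) \<ge> c * exp (- assoc_fun M (m * norm x) - assoc_fun M (m * norm \<xi>))"
        using B1(2) Roumieu by (simp add: hypo_lower_def Let_def)
      then obtain c where "c > 0" "\<forall>x \<xi>. (x, \<xi>) \<in> QBc B1 \<longrightarrow>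
          norm (a (x, \<xi>)) \<ge> c * exp (- assoc_fun M (1 * norm x) - assoc_fun M (1 * norm \<xi>))"
        by (meson zero_less_one)
      then show ?thesis using z1 that by blast
    qed
    have "c * exp (- assoc_fun M (m * norm x) - assoc_fun M (m * norm \<xi>)) > 0"
      using cm(1) by simp
    then have "norm (a (x, \<xi>)) > 0" using cm(2) by linarith
    then show ?thesis using zx by auto
  qed
  have main: "\<exists>K>0. \<forall>\<alpha> \<beta> z. z \<in> QBc B \<longrightarrow> norm (Dxi \<alpha> (Dx \<beta> (\<lambda>z. inverse (a z))) z) \<le>
     K * (2 * h1) ^ (mi_abs \<alpha> + mi_abs \<beta>) * norm (inverse (a z)) * A (mi_abs (\<lambda>i. \<alpha> i + \<beta> i))
       / jbr z powr (\<rho> * real (mi_abs \<alpha> + mi_abs \<beta>))"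
    if "deriv_est A \<rho> B2 h1 C1 a" "h1 > 0" "C1 > 0" for h1 C1
    by (rule core[OF sm W A(4) that nz BB(1)])
  show ?thesis
  proof (intro exI[of _ B] conjI)
    show "B > 0" by fact
    show "\<forall>z\<in>QBc B. a z \<noteq> 0" using nz by blast
    show "let p0 = (\<lambda>z. inverse (a z));
         est = (\<lambda>h C. \<forall>\<alpha> \<beta> z. z \<in> QBc B \<longrightarrow>
                 norm (Dxi \<alpha> (Dx \<beta> p0) z) \<le>
                   C * h ^ (mi_abs \<alpha> + mi_abs \<beta>) * norm (p0 z) * A (mi_abs (\<lambda>i. \<alpha> i + \<beta> i))
                   / jbr z powr (\<rho> * real (mi_abs \<alpha> + mi_abs \<beta>)))
     in case k of
          Beurling \<Rightarrow> (\<forall>h>0. \<exists>C>0. est h C)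
        | Roumieu \<Rightarrow> (\<exists>h>0. \<exists>C>0. est h C)"
    proof (cases k)
      case Beurling
      have "\<exists>C>0. \<forall>\<alpha> \<beta> z. z \<in> QBc B \<longrightarrow> norm (Dxi \<alpha> (Dx \<beta> (\<lambda>z. inverse (a z))) z) \<le>
           C * h ^ (mi_abs \<alpha> + mi_abs \<beta>) * norm (inverse (a z)) * A (mi_abs (\<lambda>i. \<alpha> i + \<beta> i))
             / jbr z powr (\<rho> * real (mi_abs \<alpha> + mi_abs \<beta>))" if h: "h > 0" for h
      proof -
        have "\<forall>h>0. \<exists>C>0. deriv_est A \<rho> B2 h C a" using B2(2) Beurling by (simp add: hypo_upper_def)
        moreover have "h / 2 > 0" using h by simp
        ultimately obtain C1 where C1: "C1 > 0" "deriv_est A \<rho> B2 (h / 2) C1 a" by blast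
        from main[OF C1(2) _ C1(1)] h show ?thesis by simp
      qed
      then show ?thesis using Beurling by (simp add: Let_def)
    next
      case Roumieu
      obtain h1 C1 where hc: "h1 > 0" "C1 > 0" "deriv_est A \<rho> B2 h1 C1 a"
      proof -
        have "\<exists>h>0. \<exists>C>0. deriv_est A \<rho> B2 h C a" using B2(2) Roumieu by (simp add: hypo_upper_def)
        then show ?thesis using that by blast
      qed
      obtain K where "K > 0" "\<forall>\<alpha> \<beta> z. z \<in> QBc B \<longrightarrow> norm (Dxi \<alpha> (Dx \<beta> (\<lambda>z. inverse (a z))) z) \<le>
         K * (2 * h1) ^ (mi_abs \<alpha> + mi_abs \<beta>) * norm (inverse (a z)) * A (mi_abs (\<lambda>i. \<alpha> i + \<beta> i))
           / jbr z powr (\<rho> * real (mi_abs \<alpha> + mi_abs \<beta>))"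
        using main[OF hc(3,1,2)] by blast
      moreover have "2 * h1 > 0" using hc by simp
      ultimately have "\<exists>h>0. \<exists>C>0. \<forall>\<alpha> \<beta> z. z \<in> QBc B \<longrightarrow> norm (Dxi \<alpha> (Dx \<beta> (\<lambda>z. inverse (a z))) z) \<le>
         C * h ^ (mi_abs \<alpha> + mi_abs \<beta>) * norm (inverse (a z)) * A (mi_abs (\<lambda>i. \<alpha> i + \<beta> i))
           / jbr z powr (\<rho> * real (mi_abs \<alpha> + mi_abs \<beta>))" by blast
      then show ?thesis using Roumieu by (simp add: Let_def)
    qed
  qed
qed


end
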